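(* Let $\Sigma\in\mathbb{R}^{p\times p}$ be symmetric positive definite and $\Gamma\in\mathbb{R}^{p\times q}$ have full column rank, and set $\Theta=\Sigma+\Gamma\Gamma^T$ with eigendecomposition $\Theta=PD^2P^T$, where $P$ is orthogonal and $D$ is diagonal with $D_{11}\ge D_{22}\ge\cdots\ge D_{pp}>0$. Suppose $\sigma_l$ is bounded away from $0$ and $\gamma_l>c\,\sigma_u$ for a constant $c>1$. Then \[ \|P H_q(D^2)P^T-\Sigma\|_\infty\lesssim \rho_1\rho_2+\gamma_u\rho_1^2/\gamma_l^2 . \]
   Context: Notation: $\gamma_l=\lambda_{\min}(\Gamma^T\Gamma)$, $\gamma_u=\lambda_{\max}(\Gamma^T\Gamma)$, $\sigma_l=\lambda_{\min}(\Sigma)$, $\sigma_u=\lambda_{\max}(\Sigma)$. $\Pi_\Gamma=\Gamma(\Gamma^T\Gamma)^{-1}\Gamma^T$, $\rho_1=\|\Pi_\Gamma\Sigma\|$ (operator norm), $\rho_2=\max_j\|\Pi_\Gamma e_j\|_2$ with $e_j$ the $j$th standard basis vector. For a $p\times p$ matrix $E$, $H_q(E)$ is the matrix with $(H_q(E))_{jk}=0$ if $j,k\le q$ and $(H_q(E))_{jk}=E_{jk}$ otherwise. $\|A\|_\infty=\max_{j,k}|A_{jk}|$. The quantities $p,q,\Sigma,\Gamma$ may vary along a sequence of problems; $a\lesssim b$ means $a\le Cb$ for a constant $C$ depending only on the constants in the hypotheses (here $c$ and the lower bound on $\sigma_l$), not on $p,q,\Sigma,\Gamma$. *)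

theory Defs
  imports "Jordan_Normal_Form.Char_Poly" "Jordan_Normal_Form.Gauss_Jordan_Elimination"
begin

text \<open>Matrices are Jordan_Normal_Form matrices over the reals; indices are 0-based.\<close>

definition sym_pos_def_mat :: "real mat \<Rightarrow> nat \<Rightarrow> bool" where
  "sym_pos_def_mat S p \<longleftrightarrow> S \<in> carrier_mat p p \<and> transpose_mat S = S \<and>
     (\<forall>x \<in> carrier_vec p. x \<noteq> 0\<^sub>v p \<longrightarrow> x \<bullet> (S *\<^sub>v x) > 0)"

definition full_col_rank :: "real mat \<Rightarrow> bool" where
  "full_col_rank G \<longleftrightarrow> (\<forall>x \<in> carrier_vec (dim_col G). G *\<^sub>v x = 0\<^sub>v (dim_row G) \<longrightarrow> x = 0\<^sub>v (dim_col G))"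

definition lambda_min :: "real mat \<Rightarrow> real" where
  "lambda_min A = Min {k. eigenvalue A k}"

definition lambda_max :: "real mat \<Rightarrow> real" where
  "lambda_max A = Max {k. eigenvalue A k}"

definition vnorm2 :: "real vec \<Rightarrow> real" where
  "vnorm2 v = sqrt (v \<bullet> v)"

definition op_norm :: "real mat \<Rightarrow> real" where
  "op_norm A = Sup {vnorm2 (A *\<^sub>v x) | x. x \<in> carrier_vec (dim_col A) \<and> vnorm2 x = 1}"

text \<open>Entrywise max norm (0 for an empty matrix).\<close>
definition max_abs :: "real mat \<Rightarrow> real" where
  "max_abs A = Max (insert 0 {\<bar>A $$ (i,j)\<bar> | i j. i < dim_row A \<and> j < dim_col A})"

definition inv_mat :: "real mat \<Rightarrow> real mat" where
  "inv_mat A = the (mat_inverse A)"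

definition proj_mat :: "real mat \<Rightarrow> real mat" where
  "proj_mat G = G * inv_mat (transpose_mat G * G) * transpose_mat G"

definition H_trunc :: "nat \<Rightarrow> real mat \<Rightarrow> real mat" where
  "H_trunc q E = mat (dim_row E) (dim_col E) (\<lambda>(j,k). if j < q \<and> k < q then 0 else E $$ (j,k))"

definition rho1 :: "real mat \<Rightarrow> real mat \<Rightarrow> real" where
  "rho1 S G = op_norm (proj_mat G * S)"

definition rho2 :: "real mat \<Rightarrow> real" where
  "rho2 G = Max (insert 0 ((\<lambda>j. vnorm2 (proj_mat G *\<^sub>v unit_vec (dim_row G) j)) ` {0..<dim_row G}))"

end

theory Submission
  imports Defs
begin

lemma quad_disc:
  fixes a b c :: real
  assumes c: "c \<ge> 0" and h: "\<And>t. 0 \<le> a + 2*b*t + c*t^2"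
  shows "b^2 \<le> a*c"
proof (cases "c = 0")
  case True
  have "b = 0"
  proof (rule ccontr)
    assume "b \<noteq> 0"
    have "0 \<le> a + 2*b*(-(\<bar>a\<bar>+1)/b)" using h[of "-(\<bar>a\<bar>+1)/b"] True by simp
    also have "\<dots> = a - 2*(\<bar>a\<bar>+1)" using \<open>b\<noteq>0\<close> by (simp add: field_simps)
    finally show False by (cases "a \<ge> 0") auto
  qed
  then show ?thesis using True by simp
next
  case False
  hence cp: "c > 0" using c by simp
  have "0 \<le> a + 2*b*(-b/c) + c*(-b/c)^2" by (rule h)
  also have "\<dots> = a - b^2/c" using cp by (simp add: field_simps power2_eq_square)
  finally have "b^2/c \<le> a" by simp
  thus ?thesis using cp by (simp add: field_simps mult.commute)
qed

lemma sp_self_nonneg: "0 \<le> (x::real vec) \<bullet> x"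
  unfolding scalar_prod_def by (auto intro!: sum_nonneg)

lemma sp_self_zero: assumes "(x::real vec) \<in> carrier_vec n" "x \<bullet> x = 0" shows "x = 0\<^sub>v n"
proof -
  have "\<forall>i\<in>{0..<dim_vec x}. x$i * x$i = 0"
    using assms(2) unfolding scalar_prod_def
    by (subst sum_nonneg_eq_0_iff[symmetric]) auto
  thus ?thesis using assms(1) by (intro eq_vecI) auto
qed

lemma vnorm2_nonneg: "0 \<le> vnorm2 x" unfolding vnorm2_def using sp_self_nonneg by simp

lemma vnorm2_sq: "(vnorm2 x)^2 = x \<bullet> x" unfolding vnorm2_def using sp_self_nonneg by simp

lemma cs_gen:
  fixes a b :: "real vec"
  assumes "a \<in> carrier_vec n" "b \<in> carrier_vec n"
  shows "(a \<bullet> b)^2 \<le> (a \<bullet> a) * (b \<bullet> b)"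
proof (rule quad_disc)
  show "0 \<le> b \<bullet> b" by (rule sp_self_nonneg)
  fix t :: real
  have "(a + t \<cdot>\<^sub>v b) \<bullet> (a + t \<cdot>\<^sub>v b) = a \<bullet> a + 2 * (a \<bullet> b) * t + (b \<bullet> b) * t^2"
    using assms by (simp add: scalar_prod_add_distrib add_scalar_prod_distrib comm_scalar_prod[of b n a]
        power2_eq_square algebra_simps)
  thus "0 \<le> a \<bullet> a + 2 * (a \<bullet> b) * t + (b \<bullet> b) * t^2" using sp_self_nonneg by metis
qed

lemma cs: assumes "(a::real vec) \<in> carrier_vec n" "b \<in> carrier_vec n"
  shows "\<bar>a \<bullet> b\<bar> \<le> vnorm2 a * vnorm2 b"
proof -
  have "\<bar>a \<bullet> b\<bar>^2 \<le> (vnorm2 a * vnorm2 b)^2"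
    using cs_gen[OF assms] by (simp add: power_mult_distrib vnorm2_sq)
  thus ?thesis using vnorm2_nonneg by (meson abs_ge_zero mult_nonneg_nonneg power2_le_imp_le)
qed

lemma vnorm2_add: assumes "(a::real vec) \<in> carrier_vec n" "b \<in> carrier_vec n"
  shows "vnorm2 (a + b) \<le> vnorm2 a + vnorm2 b"
proof -
  have "(a+b) \<bullet> (a+b) = a \<bullet> a + 2*(a \<bullet> b) + b \<bullet> b"
    using assms by (simp add: scalar_prod_add_distrib add_scalar_prod_distrib comm_scalar_prod[of b n a])
  also have "\<dots> \<le> (vnorm2 a + vnorm2 b)^2"
    using cs[OF assms] by (simp add: power2_sum vnorm2_sq[symmetric])
  finally have "(vnorm2 (a+b))^2 \<le> (vnorm2 a + vnorm2 b)^2" by (simp add: vnorm2_sq)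
  thus ?thesis using vnorm2_nonneg by (meson add_nonneg_nonneg power2_le_imp_le)
qed

lemma vnorm2_smult: "vnorm2 (t \<cdot>\<^sub>v (a::real vec)) = \<bar>t\<bar> * vnorm2 a"
proof -
  have "(t \<cdot>\<^sub>v a) \<bullet> (t \<cdot>\<^sub>v a) = t^2 * (a \<bullet> a)"
    by (simp add: power2_eq_square)
  thus ?thesis unfolding vnorm2_def by (simp add: real_sqrt_mult)
qed

lemma vnorm2_zero_iff: assumes "(x::real vec) \<in> carrier_vec n" shows "vnorm2 x = 0 \<longleftrightarrow> x = 0\<^sub>v n"
  using sp_self_zero[OF assms] assms unfolding vnorm2_def by auto

lemma vnorm2_le_from_sp: assumes "(x::real vec) \<bullet> x \<le> K * vnorm2 x" "K \<ge> 0"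
  shows "vnorm2 x \<le> K"
proof -
  have "vnorm2 x * vnorm2 x \<le> K * vnorm2 x" using assms(1) vnorm2_sq[of x] by (simp add: power2_eq_square)
  thus ?thesis using vnorm2_nonneg[of x] assms(2)
    by (metis mult_right_le_imp_le linorder_not_le mult_zero_right order.strict_iff_order)
qed

lemma mat_vec_sq: assumes "(A::real mat) \<in> carrier_mat m n"
  shows "(A *\<^sub>v x) \<bullet> (A *\<^sub>v x) = (\<Sum>i<m. (row A i \<bullet> x)^2)"
  using assms unfolding scalar_prod_def[of "A *\<^sub>v x"]
  by (auto simp: atLeast0LessThan intro!: sum.cong) (simp add: power2_eq_square)

lemma mat_bound: assumes A: "(A::real mat) \<in> carrier_mat m n"
  shows "\<exists>B\<ge>0. \<forall>x\<in>carrier_vec n. vnorm2 (A *\<^sub>v x) \<le> B * vnorm2 x"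
proof -
  define B where "B = sqrt (\<Sum>i<m. row A i \<bullet> row A i)"
  have B0: "B \<ge> 0" unfolding B_def by (auto intro!: sum_nonneg sp_self_nonneg)
  { fix x :: "real vec" assume x: "x \<in> carrier_vec n"
    have "(A *\<^sub>v x) \<bullet> (A *\<^sub>v x) = (\<Sum>i<m. (row A i \<bullet> x)^2)" by (rule mat_vec_sq[OF A])
    also have "\<dots> \<le> (\<Sum>i<m. (row A i \<bullet> row A i) * (x \<bullet> x))"
      by (rule sum_mono, rule cs_gen[of _ n], insert A x, auto)
    also have "\<dots> = B^2 * (x \<bullet> x)" unfolding B_def
      by (simp add: sum_distrib_right sum_nonneg sp_self_nonneg)
    finally have "(vnorm2 (A *\<^sub>v x))^2 \<le> (B * vnorm2 x)^2"
      by (simp add: vnorm2_sq power_mult_distrib)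
    hence "vnorm2 (A *\<^sub>v x) \<le> B * vnorm2 x"
      using B0 vnorm2_nonneg by (meson mult_nonneg_nonneg power2_le_imp_le)
  }
  thus ?thesis using B0 by blast
qed

lemma sym_sp: assumes A: "(A::real mat) \<in> carrier_mat n n" and s: "transpose_mat A = A"
  and x: "x \<in> carrier_vec n" and y: "y \<in> carrier_vec n"
  shows "x \<bullet> (A *\<^sub>v y) = (A *\<^sub>v x) \<bullet> y"
  using transpose_vec_mult_scalar[OF A y x] s by simp

lemma sym_sp': assumes A: "(A::real mat) \<in> carrier_mat n n" and s: "transpose_mat A = A"
  and x: "x \<in> carrier_vec n" and y: "y \<in> carrier_vec n"
  shows "x \<bullet> (A *\<^sub>v y) = y \<bullet> (A *\<^sub>v x)"
  using sym_sp[OF A s x y] comm_scalar_prod[of "A *\<^sub>v x" n y] A x y by simp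

lemma psd_cs: assumes A: "(A::real mat) \<in> carrier_mat n n" and s: "transpose_mat A = A"
  and psd: "\<And>x. x \<in> carrier_vec n \<Longrightarrow> 0 \<le> x \<bullet> (A *\<^sub>v x)"
  and a: "a \<in> carrier_vec n" and b: "b \<in> carrier_vec n"
  shows "(a \<bullet> (A *\<^sub>v b))^2 \<le> (a \<bullet> (A *\<^sub>v a)) * (b \<bullet> (A *\<^sub>v b))"
proof (rule quad_disc)
  show "0 \<le> b \<bullet> (A *\<^sub>v b)" using psd b by auto
  fix t :: real
  have e: "(a + t \<cdot>\<^sub>v b) \<bullet> (A *\<^sub>v (a + t \<cdot>\<^sub>v b)) = a \<bullet> (A *\<^sub>v a) + 2 * (a \<bullet> (A *\<^sub>v b)) * t + (b \<bullet> (A *\<^sub>v b)) * t^2"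
    using a b A sym_sp'[OF A s b a]
    by (simp add: mult_add_distrib_mat_vec[OF A] mult_mat_vec[OF A] scalar_prod_add_distrib[of _ n]
        add_scalar_prod_distrib[of _ n] power2_eq_square algebra_simps)
  show "0 \<le> a \<bullet> (A *\<^sub>v a) + 2 * (a \<bullet> (A *\<^sub>v b)) * t + (b \<bullet> (A *\<^sub>v b)) * t^2"
    using psd[of "a + t \<cdot>\<^sub>v b"] a b e by auto
qed

lemma psd_norm_bound: assumes A: "(A::real mat) \<in> carrier_mat n n" and s: "transpose_mat A = A"
  and psd: "\<And>x. x \<in> carrier_vec n \<Longrightarrow> 0 \<le> x \<bullet> (A *\<^sub>v x)"
  and up: "\<And>x. x \<in> carrier_vec n \<Longrightarrow> x \<bullet> (A *\<^sub>v x) \<le> \<sigma> * (x \<bullet> x)"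
  and x: "x \<in> carrier_vec n" and sg: "\<sigma> \<ge> 0"
  shows "vnorm2 (A *\<^sub>v x) \<le> \<sigma> * vnorm2 x"
proof -
  define y where "y = A *\<^sub>v x"
  have y: "y \<in> carrier_vec n" unfolding y_def using A x by auto
  have "(y \<bullet> y)^2 \<le> (y \<bullet> (A *\<^sub>v y)) * (x \<bullet> (A *\<^sub>v x))"
    using psd_cs[OF A s psd y x] unfolding y_def by simp
  also have "\<dots> \<le> (\<sigma> * (y \<bullet> y)) * (\<sigma> * (x \<bullet> x))"
    by (rule mult_mono, auto intro: up psd x y simp: sg sp_self_nonneg)
  finally have h: "(y \<bullet> y) * (y \<bullet> y) \<le> (y \<bullet> y) * (\<sigma>^2 * (x \<bullet> x))"
    by (simp add: power2_eq_square algebra_simps)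
  have "y \<bullet> y \<le> \<sigma>^2 * (x \<bullet> x)"
  proof (cases "y \<bullet> y = 0")
    case True thus ?thesis by (simp add: sp_self_nonneg)
  next
    case False
    hence "y \<bullet> y > 0" using sp_self_nonneg[of y] by linarith
    thus ?thesis using h by simp
  qed
  hence "(vnorm2 y)^2 \<le> (\<sigma> * vnorm2 x)^2" by (simp add: vnorm2_sq power_mult_distrib)
  thus ?thesis unfolding y_def[symmetric]
    using sg vnorm2_nonneg by (meson mult_nonneg_nonneg power2_le_imp_le)
qed

lemma unit_sp: "i < n \<Longrightarrow> unit_vec n i \<bullet> unit_vec n i = (1::real)"
  by simp

lemma sym_entry: assumes "(A::real mat) \<in> carrier_mat n n" "transpose_mat A = A" "i < n" "j < n"
  shows "A $$ (i,j) = A $$ (j,i)"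
  by (metis assms index_transpose_mat(1) carrier_matD)

lemma smat_minus_mult: assumes A: "(A::real mat) \<in> carrier_mat n n" and x: "x \<in> carrier_vec n"
  shows "(\<mu> \<cdot>\<^sub>m 1\<^sub>m n - A) *\<^sub>v x = \<mu> \<cdot>\<^sub>v x - A *\<^sub>v x"
  using A x by (subst minus_mult_distrib_mat_vec[of _ n n]) auto

lemma rayleigh: assumes A: "(A::real mat) \<in> carrier_mat n n" and s: "transpose_mat A = A" and n: "n > 0"
  shows "\<exists>\<mu>. eigenvalue A \<mu> \<and> (\<forall>x\<in>carrier_vec n. x \<bullet> (A *\<^sub>v x) \<le> \<mu> * (x \<bullet> x))"
proof -
  define R where "R = {x \<bullet> (A *\<^sub>v x) | x. x \<in> carrier_vec n \<and> x \<bullet> x = 1}"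
  obtain B where B0: "B \<ge> 0" and B: "\<And>x. x\<in>carrier_vec n \<Longrightarrow> vnorm2 (A *\<^sub>v x) \<le> B * vnorm2 x"
    using mat_bound[OF A] by blast
  have Rne: "R \<noteq> {}" unfolding R_def using n
    by (auto intro!: exI[of _ "unit_vec n 0"])
  have Rbd: "\<And>r. r \<in> R \<Longrightarrow> r \<le> B"
  proof -
    fix r assume "r \<in> R"
    then obtain x where x: "x \<in> carrier_vec n" "x \<bullet> x = 1" and r: "r = x \<bullet> (A *\<^sub>v x)" unfolding R_def by auto
    have nx: "vnorm2 x = 1" unfolding vnorm2_def using x by simp
    have "r \<le> vnorm2 x * vnorm2 (A *\<^sub>v x)" using cs[OF x(1) mult_mat_vec_carrier[OF A x(1)]] r by auto
    also have "\<dots> \<le> B" using B[OF x(1)] nx by simp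
    finally show "r \<le> B" .
  qed
  define \<mu> where "\<mu> = Sup R"
  have bddR: "bdd_above R" using Rbd by (intro bdd_aboveI[where M=B]) auto
  have ray: "x \<bullet> (A *\<^sub>v x) \<le> \<mu> * (x \<bullet> x)" if x: "x \<in> carrier_vec n" for x
  proof (cases "x \<bullet> x = 0")
    case True
    hence "x = 0\<^sub>v n" using sp_self_zero x by auto
    thus ?thesis using A by simp
  next
    case False
    hence xp: "x \<bullet> x > 0" using sp_self_nonneg[of x] by linarith
    define t where "t = 1 / sqrt (x \<bullet> x)"
    define y where "y = t \<cdot>\<^sub>v x"
    have y: "y \<in> carrier_vec n" unfolding y_def using x by auto
    have "y \<bullet> y = t^2 * (x \<bullet> x)" unfolding y_def using x by (simp add: power2_eq_square)
    also have "\<dots> = 1" unfolding t_def using xp by (simp add: power_divide)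
    finally have yy: "y \<bullet> y = 1" .
    have "y \<bullet> (A *\<^sub>v y) = t^2 * (x \<bullet> (A *\<^sub>v x))" unfolding y_def using x A
      by (simp add: mult_mat_vec[OF A] power2_eq_square)
    moreover have "y \<bullet> (A *\<^sub>v y) \<le> \<mu>" unfolding \<mu>_def
      by (rule cSup_upper[OF _ bddR], unfold R_def, insert y yy, auto)
    ultimately have "t^2 * (x \<bullet> (A *\<^sub>v x)) \<le> \<mu>" by simp
    moreover have "t^2 = 1 / (x \<bullet> x)" unfolding t_def using xp by (simp add: power_divide)
    ultimately show ?thesis using xp by (simp add: field_simps)
  qed
  define M where "M = \<mu> \<cdot>\<^sub>m 1\<^sub>m n - A"
  have M: "M \<in> carrier_mat n n" unfolding M_def using A by auto
  have Mx: "M *\<^sub>v x = \<mu> \<cdot>\<^sub>v x - A *\<^sub>v x" if "x \<in> carrier_vec n" for x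
    unfolding M_def using smat_minus_mult[OF A that] .
  have Ms: "transpose_mat M = M" unfolding M_def using A s
    by (intro eq_matI) (auto simp: sym_entry[OF A s])
  have xMx: "x \<bullet> (M *\<^sub>v x) = \<mu> * (x \<bullet> x) - x \<bullet> (A *\<^sub>v x)" if x: "x \<in> carrier_vec n" for x
    using x A by (simp add: Mx[OF x] scalar_prod_minus_distrib[of x n])
  have Mpsd: "0 \<le> x \<bullet> (M *\<^sub>v x)" if x: "x \<in> carrier_vec n" for x
    using xMx[OF x] ray[OF x] by simp
  have "det M = 0"
  proof (rule ccontr)
    assume d: "det M \<noteq> 0"
    obtain N where N: "M * N = 1\<^sub>m n" "N * M = 1\<^sub>m n" "N \<in> carrier_mat n n"
    proof (cases "mat_inverse M")
      case None
      from mat_inverse(1)[OF M None, where b="()"] det_non_zero_imp_unit[OF M d, where b="()"] show ?thesis by blast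
    next
      case (Some N)
      from mat_inverse(2)[OF M Some] show ?thesis using that by blast
    qed
    obtain L where L0: "L \<ge> 0" and L: "\<And>x. x\<in>carrier_vec n \<Longrightarrow> vnorm2 (N *\<^sub>v x) \<le> L * vnorm2 x"
      using mat_bound[OF N(3)] by blast
    have low: "x \<bullet> x \<le> (L+1) * (x \<bullet> (M *\<^sub>v x))" if x: "x \<in> carrier_vec n" for x
    proof -
      define z where "z = N *\<^sub>v x"
      have z: "z \<in> carrier_vec n" unfolding z_def using N x by auto
      have Mz: "M *\<^sub>v z = x" unfolding z_def using N M x
        by (simp flip: assoc_mult_mat_vec[OF M N(3) x])
      have "(x \<bullet> x)^2 = (x \<bullet> (M *\<^sub>v z))^2" using Mz by simp
      also have "\<dots> \<le> (x \<bullet> (M *\<^sub>v x)) * (z \<bullet> (M *\<^sub>v z))" by (rule psd_cs[OF M Ms Mpsd x z])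
      also have "z \<bullet> (M *\<^sub>v z) = z \<bullet> x" using Mz by simp
      also have "z \<bullet> x \<le> vnorm2 z * vnorm2 x" using cs[OF z x] by simp
      also have "\<dots> \<le> L * vnorm2 x * vnorm2 x" using L[OF x] vnorm2_nonneg[of x] unfolding z_def
        by (simp add: mult_right_mono)
      also have "\<dots> = L * (x \<bullet> x)" using vnorm2_sq[of x] by (simp add: power2_eq_square)
      finally have h: "(x \<bullet> x)^2 \<le> (x \<bullet> (M *\<^sub>v x)) * (L * (x \<bullet> x))"
        using Mpsd[OF x] by (simp add: mult_left_mono)
      show ?thesis
      proof (cases "x \<bullet> x = 0")
        case True thus ?thesis using Mpsd[OF x] L0 by simp
      next
        case False
        hence xp: "x \<bullet> x > 0" using sp_self_nonneg[of x] by linarith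
        from h have "(x \<bullet> x) * (x \<bullet> x) \<le> (x \<bullet> x) * (L * (x \<bullet> (M *\<^sub>v x)))"
          by (simp add: power2_eq_square algebra_simps)
        hence "x \<bullet> x \<le> L * (x \<bullet> (M *\<^sub>v x))" using xp by simp
        thus ?thesis using Mpsd[OF x] by (simp add: algebra_simps)
      qed
    qed
    have "\<mu> \<le> \<mu> - 1/(L+1)" unfolding \<mu>_def
    proof (rule cSup_least[OF Rne])
      fix r assume "r \<in> R"
      then obtain x where x: "x \<in> carrier_vec n" "x \<bullet> x = 1" and r: "r = x \<bullet> (A *\<^sub>v x)" unfolding R_def by auto
      have "1 \<le> (L+1) * (x \<bullet> (M *\<^sub>v x))" using low[OF x(1)] x(2) by simp
      hence "1/(L+1) \<le> x \<bullet> (M *\<^sub>v x)" using L0 by (simp add: field_simps)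
      thus "r \<le> Sup R - 1/(L+1)" using xMx[OF x(1)] x(2) r unfolding \<mu>_def by simp
    qed
    moreover have "1/(L+1) > 0" using L0 by simp
    ultimately show False by linarith
  qed
  then obtain v where v: "v \<in> carrier_vec n" "v \<noteq> 0\<^sub>v n" "M *\<^sub>v v = 0\<^sub>v n"
    using det_0_iff_vec_prod_zero[OF M] by blast
  have "A *\<^sub>v v = \<mu> \<cdot>\<^sub>v v"
  proof -
    have "\<mu> \<cdot>\<^sub>v v - A *\<^sub>v v = 0\<^sub>v n" using v Mx by simp
    hence "\<forall>i<n. \<mu> * v$i - (A *\<^sub>v v)$i = 0" using v A by (auto simp: vec_eq_iff)
    thus ?thesis using v A by (intro eq_vecI) auto
  qed
  hence "eigenvalue A \<mu>" unfolding eigenvalue_def eigenvector_def using v A by auto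
  thus ?thesis using ray by blast
qed

lemma eig_finite: assumes A: "(A::real mat) \<in> carrier_mat n n"
  shows "finite {k. eigenvalue A k}"
proof -
  have "char_poly A \<noteq> 0" using degree_monic_char_poly[OF A] by auto
  hence "finite {k. poly (char_poly A) k = 0}" by (rule poly_roots_finite)
  thus ?thesis using eigenvalue_root_char_poly[OF A] by simp
qed

lemma lambda_max_bound: assumes A: "(A::real mat) \<in> carrier_mat n n" and s: "transpose_mat A = A" and n: "n > 0"
  and x: "x \<in> carrier_vec n"
  shows "x \<bullet> (A *\<^sub>v x) \<le> lambda_max A * (x \<bullet> x)"
proof -
  obtain \<mu> where m: "eigenvalue A \<mu>" "\<forall>x\<in>carrier_vec n. x \<bullet> (A *\<^sub>v x) \<le> \<mu> * (x \<bullet> x)"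
    using rayleigh[OF A s n] by blast
  have "\<mu> \<le> lambda_max A" unfolding lambda_max_def using m(1) eig_finite[OF A] by (auto intro: Max_ge)
  hence "\<mu> * (x \<bullet> x) \<le> lambda_max A * (x \<bullet> x)" using sp_self_nonneg[of x] by (rule mult_right_mono)
  thus ?thesis using m(2) x by force
qed

lemma eigenvalue_uminus: assumes A: "(A::real mat) \<in> carrier_mat n n"
  shows "eigenvalue (- A) k \<longleftrightarrow> eigenvalue A (-k)"
proof -
  have "((- A) *\<^sub>v v = k \<cdot>\<^sub>v v) \<longleftrightarrow> (A *\<^sub>v v = (-k) \<cdot>\<^sub>v v)" if v: "v \<in> carrier_vec n" for v
    using A v by (auto simp: vec_eq_iff) 
  moreover have "(- A) *\<^sub>v v = - (A *\<^sub>v v)" if v: "v \<in> carrier_vec n" for v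
    using A v by (intro uminus_mult_mat_vec) auto
  ultimately have "((- A) *\<^sub>v v = k \<cdot>\<^sub>v v) \<longleftrightarrow> (A *\<^sub>v v = (-k) \<cdot>\<^sub>v v)" if v: "v \<in> carrier_vec n" for v
    using v by simp
  moreover have "dim_row (- A) = n" "dim_row A = n" using A by auto
  ultimately show ?thesis unfolding eigenvalue_def eigenvector_def by metis
qed

lemma lambda_min_bound: assumes A: "(A::real mat) \<in> carrier_mat n n" and s: "transpose_mat A = A" and n: "n > 0"
  and x: "x \<in> carrier_vec n"
  shows "lambda_min A * (x \<bullet> x) \<le> x \<bullet> (A *\<^sub>v x)"
proof -
  have A': "- A \<in> carrier_mat n n" using A by auto
  have s': "transpose_mat (- A) = - A" using A s by (intro eq_matI) (auto simp: sym_entry[OF A s])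
  obtain \<mu> where m: "eigenvalue (- A) \<mu>" "\<forall>x\<in>carrier_vec n. x \<bullet> ((- A) *\<^sub>v x) \<le> \<mu> * (x \<bullet> x)"
    using rayleigh[OF A' s' n] by blast
  have e: "eigenvalue A (-\<mu>)" using m(1) eigenvalue_uminus[OF A] by simp
  have "lambda_min A \<le> -\<mu>" unfolding lambda_min_def using e eig_finite[OF A] by (auto intro: Min_le)
  hence "lambda_min A * (x \<bullet> x) \<le> (-\<mu>) * (x \<bullet> x)" using sp_self_nonneg[of x] by (rule mult_right_mono)
  moreover have "(- A) *\<^sub>v x = - (A *\<^sub>v x)" using A x by (intro uminus_mult_mat_vec) auto
  moreover have "x \<bullet> (- (A *\<^sub>v x)) = - (x \<bullet> (A *\<^sub>v x))" using A x
    by (simp add: scalar_prod_uminus_right)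
  ultimately show ?thesis using m(2) x by force
qed

lemma lambda_exists: assumes A: "(A::real mat) \<in> carrier_mat n n" and s: "transpose_mat A = A" and n: "n > 0"
  shows "\<exists>\<mu>. eigenvalue A \<mu>"
  using rayleigh[OF A s n] by blast

lemma lambda_min_le_max: assumes A: "(A::real mat) \<in> carrier_mat n n" and s: "transpose_mat A = A" and n: "n > 0"
  shows "lambda_min A \<le> lambda_max A"
proof -
  obtain \<mu> where "eigenvalue A \<mu>" using lambda_exists[OF A s n] by blast
  hence "lambda_min A \<le> \<mu>" "\<mu> \<le> lambda_max A" unfolding lambda_min_def lambda_max_def
    using eig_finite[OF A] by (auto intro: Min_le Max_ge)
  thus ?thesis by simp
qed

lemma lambda_max_nonneg: assumes A: "(A::real mat) \<in> carrier_mat n n" and s: "transpose_mat A = A" and n: "n > 0"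
  and psd: "\<And>x. x \<in> carrier_vec n \<Longrightarrow> 0 \<le> x \<bullet> (A *\<^sub>v x)"
  shows "0 \<le> lambda_max A"
proof -
  have "0 \<le> unit_vec n 0 \<bullet> (A *\<^sub>v unit_vec n 0)" using psd n by simp
  also have "\<dots> \<le> lambda_max A * (unit_vec n 0 \<bullet> unit_vec n 0)"
    by (rule lambda_max_bound[OF A s n]) (use n in simp)
  finally show ?thesis using n by simp
qed

lemma kernel_exists: assumes M: "(M::real mat) \<in> carrier_mat m n" and mn: "m < n"
  shows "\<exists>v\<in>carrier_vec n. v \<noteq> 0\<^sub>v n \<and> M *\<^sub>v v = 0\<^sub>v m"
proof -
  define c where "c = (\<lambda>i. if i < m then row M i else 0\<^sub>v n)"
  define M' where "M' = mat\<^sub>r n n (\<lambda>i. if i = n - 1 then 0\<^sub>v n else c i)"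
  have M': "M' \<in> carrier_mat n n" unfolding M'_def by auto
  have "det M' = 0" unfolding M'_def
    by (rule det_row_0) (use mn M in \<open>auto simp: c_def\<close>)
  then obtain v where v: "v \<in> carrier_vec n" "v \<noteq> 0\<^sub>v n" "M' *\<^sub>v v = 0\<^sub>v n"
    using det_0_iff_vec_prod_zero[OF M'] by blast
  have "M *\<^sub>v v = 0\<^sub>v m"
  proof (rule eq_vecI)
    fix i assume i: "i < dim_vec (0\<^sub>v m :: real vec)"
    hence im: "i < m" by simp
    have "(M' *\<^sub>v v) $ i = 0" using v(3) im mn by simp
    moreover have "(M' *\<^sub>v v) $ i = row M i \<bullet> v" using im mn M unfolding M'_def c_def
      by (simp add: mat_of_rows_def)
    ultimately show "(M *\<^sub>v v) $ i = 0\<^sub>v m $ i" using im M by simp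
  qed (use M in auto)
  thus ?thesis using v by blast
qed

lemma adjoint_bound:
  fixes H F :: "real vec \<Rightarrow> real vec"
  assumes H: "\<And>x. x \<in> carrier_vec n \<Longrightarrow> H x \<in> carrier_vec m"
    and adj: "\<And>x w. x \<in> carrier_vec n \<Longrightarrow> w \<in> carrier_vec m \<Longrightarrow> H x \<bullet> w = x \<bullet> F w"
    and F: "\<And>w. w \<in> carrier_vec m \<Longrightarrow> F w \<in> carrier_vec n"
    and Fb: "\<And>w. w \<in> carrier_vec m \<Longrightarrow> vnorm2 (F w) \<le> K * vnorm2 w"
    and K: "K \<ge> 0" and x: "x \<in> carrier_vec n"
  shows "vnorm2 (H x) \<le> K * vnorm2 x"
proof (rule vnorm2_le_from_sp)
  have "H x \<bullet> H x = x \<bullet> F (H x)" using adj[OF x H[OF x]] .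
  also have "\<dots> \<le> vnorm2 x * vnorm2 (F (H x))" using cs[OF x F[OF H[OF x]]] by simp
  also have "\<dots> \<le> vnorm2 x * (K * vnorm2 (H x))"
    by (rule mult_left_mono[OF Fb[OF H[OF x]] vnorm2_nonneg])
  finally show "H x \<bullet> H x \<le> K * vnorm2 x * vnorm2 (H x)" by (simp add: algebra_simps)
  show "K * vnorm2 x \<ge> 0" using K vnorm2_nonneg by simp
qed

lemma self_bound:
  fixes f :: "real vec \<Rightarrow> real"
  assumes B: "\<And>x. x \<in> carrier_vec n \<Longrightarrow> f x \<le> B * vnorm2 x"
    and step: "\<And>K. K \<ge> 0 \<Longrightarrow> (\<forall>x\<in>carrier_vec n. f x \<le> K * vnorm2 x) \<Longrightarrow> (\<forall>x\<in>carrier_vec n. f x \<le> (a + b*K) * vnorm2 x)"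
    and b0: "0 \<le> b" and b1: "b < 1" and a0: "a \<ge> 0"
  shows "\<forall>x\<in>carrier_vec n. f x \<le> a / (1 - b) * vnorm2 x"
proof -
  define R where "R = insert 0 {f x / vnorm2 x | x. x \<in> carrier_vec n \<and> x \<noteq> 0\<^sub>v n}"
  have bdd: "bdd_above R"
  proof (rule bdd_aboveI[where M="max B 0"])
    fix r assume "r \<in> R"
    hence "r = 0 \<or> (\<exists>x. x \<in> carrier_vec n \<and> x \<noteq> 0\<^sub>v n \<and> r = f x / vnorm2 x)" unfolding R_def by auto
    thus "r \<le> max B 0"
    proof
      assume "\<exists>x. x \<in> carrier_vec n \<and> x \<noteq> 0\<^sub>v n \<and> r = f x / vnorm2 x"
      then obtain x where x: "x \<in> carrier_vec n" "x \<noteq> 0\<^sub>v n" "r = f x / vnorm2 x" by blast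
      hence pos: "vnorm2 x > 0" using vnorm2_zero_iff[of x n] vnorm2_nonneg[of x] by auto
      have "r \<le> B" using B[OF x(1)] pos x(3) by (simp add: divide_le_eq)
      thus ?thesis by simp
    qed simp
  qed
  define s where "s = Sup R"
  have s0: "s \<ge> 0" unfolding s_def by (rule cSup_upper[OF _ bdd]) (simp add: R_def)
  have fs: "\<forall>x\<in>carrier_vec n. f x \<le> s * vnorm2 x"
  proof
    fix x :: "real vec" assume x: "x \<in> carrier_vec n"
    show "f x \<le> s * vnorm2 x"
    proof (cases "x = 0\<^sub>v n")
      case True
      hence "vnorm2 x = 0" using vnorm2_zero_iff[OF x] by simp
      thus ?thesis using B[OF x] by simp
    next
      case False
      hence pos: "vnorm2 x > 0" using vnorm2_zero_iff[OF x] vnorm2_nonneg[of x] by auto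
      have "f x / vnorm2 x \<le> s" unfolding s_def
        by (rule cSup_upper[OF _ bdd]) (use x False in \<open>auto simp: R_def\<close>)
      thus ?thesis using pos by (simp add: divide_le_eq)
    qed
  qed
  have st: "\<forall>x\<in>carrier_vec n. f x \<le> (a + b*s) * vnorm2 x" by (rule step[OF s0 fs])
  have "s \<le> a + b*s" unfolding s_def
  proof (rule cSup_least)
    show "R \<noteq> {}" unfolding R_def by simp
    fix r assume "r \<in> R"
    hence "r = 0 \<or> (\<exists>x. x \<in> carrier_vec n \<and> x \<noteq> 0\<^sub>v n \<and> r = f x / vnorm2 x)" unfolding R_def by auto
    thus "r \<le> a + b * Sup R"
    proof
      assume "r = 0" thus ?thesis using a0 b0 s0 unfolding s_def by simp
    next
      assume "\<exists>x. x \<in> carrier_vec n \<and> x \<noteq> 0\<^sub>v n \<and> r = f x / vnorm2 x"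
      then obtain x where x: "x \<in> carrier_vec n" "x \<noteq> 0\<^sub>v n" "r = f x / vnorm2 x" by blast
      hence pos: "vnorm2 x > 0" using vnorm2_zero_iff[of x n] vnorm2_nonneg[of x] by auto
      thus ?thesis using st x unfolding s_def by (simp add: divide_le_eq)
    qed
  qed
  hence "s \<le> a / (1 - b)" using b1 by (simp add: field_simps)
  thus ?thesis using fs by (meson mult_right_mono order_trans vnorm2_nonneg)
qed

lemma diag_mult_vec: assumes D: "(D::real mat) \<in> carrier_mat n n" and d: "diagonal_mat D" and w: "w \<in> carrier_vec n"
  shows "D *\<^sub>v w = vec n (\<lambda>i. D $$ (i,i) * w $ i)"
proof (rule eq_vecI)
  fix i assume "i < dim_vec (vec n (\<lambda>i. D $$ (i,i) * w $ i))"
  hence i: "i < n" by simp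
  have "(D *\<^sub>v w) $ i = (\<Sum>j\<in>{0..<n}. D $$ (i,j) * w $ j)"
    using D w i by (simp add: scalar_prod_def)
  also have "\<dots> = D $$ (i,i) * w $ i"
    by (subst sum.remove[of _ i]) (use d D i in \<open>auto simp: diagonal_mat_def intro!: sum.neutral\<close>)
  finally show "(D *\<^sub>v w) $ i = vec n (\<lambda>i. D $$ (i,i) * w $ i) $ i" using i by simp
qed (use D in auto)

lemma op_norm_bound: assumes A: "(A::real mat) \<in> carrier_mat m n" and x: "x \<in> carrier_vec n"
  shows "vnorm2 (A *\<^sub>v x) \<le> op_norm A * vnorm2 x"
proof -
  define R where "R = {vnorm2 (A *\<^sub>v x) | x. x \<in> carrier_vec (dim_col A) \<and> vnorm2 x = 1}"
  obtain B where B0: "B \<ge> 0" and B: "\<And>x. x\<in>carrier_vec n \<Longrightarrow> vnorm2 (A *\<^sub>v x) \<le> B * vnorm2 x"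
    using mat_bound[OF A] by blast
  have bdd: "bdd_above R"
  proof (rule bdd_aboveI[where M=B])
    fix r assume "r \<in> R"
    then obtain y where "y \<in> carrier_vec n" "vnorm2 y = 1" "r = vnorm2 (A *\<^sub>v y)" unfolding R_def using A by auto
    thus "r \<le> B" using B[of y] by simp
  qed
  show ?thesis
  proof (cases "x = 0\<^sub>v n")
    case True
    have "A *\<^sub>v 0\<^sub>v n = 0\<^sub>v m" using A by (intro eq_vecI) auto
    thus ?thesis using True by (simp add: vnorm2_def)
  next
    case False
    hence pos: "vnorm2 x > 0" using vnorm2_zero_iff[OF x] vnorm2_nonneg[of x] by auto
    define y where "y = (1 / vnorm2 x) \<cdot>\<^sub>v x"
    have y: "y \<in> carrier_vec n" "vnorm2 y = 1" unfolding y_def using x pos by (auto simp: vnorm2_smult)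
    have "A *\<^sub>v y = (1 / vnorm2 x) \<cdot>\<^sub>v (A *\<^sub>v x)" unfolding y_def by (rule mult_mat_vec[OF A x])
    hence "vnorm2 (A *\<^sub>v y) = vnorm2 (A *\<^sub>v x) / vnorm2 x" using pos by (simp add: vnorm2_smult)
    moreover have "vnorm2 (A *\<^sub>v y) \<le> op_norm A" unfolding op_norm_def
      by (rule cSup_upper[OF _ bdd[unfolded R_def]]) (use y A in auto)
    ultimately show ?thesis using pos by (simp add: divide_le_eq mult.commute)
  qed
qed

lemma op_norm_nonneg: assumes A: "(A::real mat) \<in> carrier_mat m n" and n: "n > 0"
  shows "0 \<le> op_norm A"
proof -
  have "vnorm2 (A *\<^sub>v unit_vec n 0) \<le> op_norm A * vnorm2 (unit_vec n 0)"
    by (rule op_norm_bound[OF A]) (use n in simp)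
  moreover have "vnorm2 (unit_vec n 0 :: real vec) = 1" using n by (simp add: vnorm2_def)
  ultimately show ?thesis using vnorm2_nonneg[of "A *\<^sub>v unit_vec n 0"] by simp
qed

lemma rho2_bound: assumes "j < dim_row G"
  shows "vnorm2 (proj_mat G *\<^sub>v unit_vec (dim_row G) j) \<le> rho2 G"
  unfolding rho2_def using assms by (intro Max_ge) auto

lemma rho2_nonneg: "0 \<le> rho2 G"
  unfolding rho2_def by (intro Max_ge) auto

lemma max_abs_le: assumes "\<And>i j. i < dim_row A \<Longrightarrow> j < dim_col A \<Longrightarrow> \<bar>A $$ (i,j)\<bar> \<le> b" and "b \<ge> 0"
  shows "max_abs A \<le> b"
proof -
  have fin: "finite {\<bar>A $$ (i,j)\<bar> | i j. i < dim_row A \<and> j < dim_col A}"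
    using finite_image_set2[of "\<lambda>i. i < dim_row A" "\<lambda>j. j < dim_col A" "\<lambda>i j. \<bar>A $$ (i,j)\<bar>"] by simp
  show ?thesis unfolding max_abs_def using fin assms by (subst Max_le_iff) auto
qed

lemma sp_transpose: assumes A: "(A::real mat) \<in> carrier_mat m n" and x: "x \<in> carrier_vec m" and y: "y \<in> carrier_vec n"
  shows "x \<bullet> (A *\<^sub>v y) = (transpose_mat A *\<^sub>v x) \<bullet> y"
  using transpose_vec_mult_scalar[OF A y x] by simp

lemma gram_sp: assumes G: "(G::real mat) \<in> carrier_mat p q" and y: "y \<in> carrier_vec q"
  shows "y \<bullet> ((transpose_mat G * G) *\<^sub>v y) = (G *\<^sub>v y) \<bullet> (G *\<^sub>v y)"
proof -
  have "(transpose_mat G * G) *\<^sub>v y = transpose_mat G *\<^sub>v (G *\<^sub>v y)" using G y by auto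
  moreover have "y \<bullet> (transpose_mat G *\<^sub>v (G *\<^sub>v y)) = (G *\<^sub>v y) \<bullet> (G *\<^sub>v y)"
    using sp_transpose[of "transpose_mat G" q p y "G *\<^sub>v y"] G y by auto
  ultimately show ?thesis by simp
qed

locale setting =
  fixes p q :: nat and S G P D :: "real mat" and \<sigma> g c :: real
  assumes p: "p > 0" and q: "q > 0"
  and S: "S \<in> carrier_mat p p" and Ss: "transpose_mat S = S"
  and Spsd: "\<And>x. x \<in> carrier_vec p \<Longrightarrow> 0 \<le> x \<bullet> (S *\<^sub>v x)"
  and Sup: "\<And>x. x \<in> carrier_vec p \<Longrightarrow> x \<bullet> (S *\<^sub>v x) \<le> \<sigma> * (x \<bullet> x)"
  and \<sigma>0: "\<sigma> \<ge> 0"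
  and G: "G \<in> carrier_mat p q"
  and fcr: "\<And>y. y \<in> carrier_vec q \<Longrightarrow> G *\<^sub>v y = 0\<^sub>v p \<Longrightarrow> y = 0\<^sub>v q"
  and Glow: "\<And>y. y \<in> carrier_vec q \<Longrightarrow> g * (y \<bullet> y) \<le> y \<bullet> ((transpose_mat G * G) *\<^sub>v y)"
  and c1: "c > 1" and gap: "g > c * \<sigma>"
  and P: "P \<in> carrier_mat p p" and PtP: "transpose_mat P * P = 1\<^sub>m p"
  and D: "D \<in> carrier_mat p p" and Ddiag: "diagonal_mat D"
  and Dord: "\<forall>i j. i \<le> j \<and> j < p \<longrightarrow> D $$ (j,j) \<le> D $$ (i,i)"
  and Dpos: "\<forall>i<p. D $$ (i,i) > 0"
  and decomp: "S + G * transpose_mat G = P * (D * D) * transpose_mat P"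
begin

abbreviation "Pt \<equiv> transpose_mat P"
abbreviation "Gt \<equiv> transpose_mat G"
abbreviation "A \<equiv> Gt * G"

lemma Pt: "Pt \<in> carrier_mat p p" using P by simp
lemma Gt: "Gt \<in> carrier_mat q p" using G by simp
lemma A: "A \<in> carrier_mat q q" using G by simp

lemma g_pos: "g > 0"
proof -
  have "c * \<sigma> \<ge> 0" using c1 \<sigma>0 by simp
  thus ?thesis using gap by simp
qed

lemma g_sigma: "\<sigma> < g"
proof -
  have "\<sigma> \<le> c * \<sigma>" using c1 \<sigma>0 by (simp add: mult_le_cancel_right1)
  thus ?thesis using gap by simp
qed

lemma q_le_p: "q \<le> p"
proof (rule ccontr)
  assume "\<not> q \<le> p"
  then obtain y where "y \<in> carrier_vec q" "y \<noteq> 0\<^sub>v q" "G *\<^sub>v y = 0\<^sub>v p" using kernel_exists[OF G] by auto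
  thus False using fcr by blast
qed

lemma PPt: "P * Pt = 1\<^sub>m p" by (rule mat_mult_left_right_inverse[OF Pt P PtP])

lemma PtPv: "w \<in> carrier_vec p \<Longrightarrow> Pt *\<^sub>v (P *\<^sub>v w) = w"
  using PtP P Pt by (metis assoc_mult_mat_vec one_mult_mat_vec)

lemma PPtv: "x \<in> carrier_vec p \<Longrightarrow> P *\<^sub>v (Pt *\<^sub>v x) = x"
  using PPt P Pt by (metis assoc_mult_mat_vec one_mult_mat_vec)

lemma Padj: "w \<in> carrier_vec p \<Longrightarrow> x \<in> carrier_vec p \<Longrightarrow> (P *\<^sub>v w) \<bullet> x = w \<bullet> (Pt *\<^sub>v x)"
  using transpose_vec_mult_scalar[OF Pt, of x w] by simp

lemma Psp: "w \<in> carrier_vec p \<Longrightarrow> w' \<in> carrier_vec p \<Longrightarrow> (P *\<^sub>v w) \<bullet> (P *\<^sub>v w') = w \<bullet> w'"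
  using Padj[of w "P *\<^sub>v w'"] PtPv[of w'] P by simp

lemma Pnorm: "w \<in> carrier_vec p \<Longrightarrow> vnorm2 (P *\<^sub>v w) = vnorm2 w"
  unfolding vnorm2_def using Psp by simp

lemma Ptnorm: "x \<in> carrier_vec p \<Longrightarrow> vnorm2 (Pt *\<^sub>v x) = vnorm2 x"
  using Pnorm[of "Pt *\<^sub>v x"] PPtv[of x] Pt by simp

definition dd :: "nat \<Rightarrow> real" where "dd i = D $$ (i,i) * D $$ (i,i)"
definition dvec :: "real vec \<Rightarrow> real vec" where "dvec w = vec p (\<lambda>i. dd i * w $ i)"

lemma dvec_carrier[simp]: "dvec w \<in> carrier_vec p" unfolding dvec_def by simp

lemma DDv: assumes w: "w \<in> carrier_vec p" shows "(D * D) *\<^sub>v w = dvec w"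
proof -
  have "(D * D) *\<^sub>v w = D *\<^sub>v (D *\<^sub>v w)" using D w by auto
  also have "\<dots> = dvec w" using diag_mult_vec[OF D Ddiag] w unfolding dvec_def dd_def
    by (auto simp: algebra_simps)
  finally show ?thesis .
qed

definition Theta :: "real mat" where "Theta = S + G * Gt"

lemma Theta: "Theta \<in> carrier_mat p p" unfolding Theta_def using S G by auto

lemma Thetav: "x \<in> carrier_vec p \<Longrightarrow> Theta *\<^sub>v x = S *\<^sub>v x + G *\<^sub>v (Gt *\<^sub>v x)"
  unfolding Theta_def using S G by (simp add: add_mult_distrib_mat_vec[of _ p p])

lemma ThetaP: assumes w: "w \<in> carrier_vec p" shows "Theta *\<^sub>v (P *\<^sub>v w) = P *\<^sub>v dvec w"
proof -
  have "Theta *\<^sub>v (P *\<^sub>v w) = (P * (D * D) * Pt) *\<^sub>v (P *\<^sub>v w)" unfolding Theta_def decomp ..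
  also have "\<dots> = (P * (D * D)) *\<^sub>v (Pt *\<^sub>v (P *\<^sub>v w))"
    by (rule assoc_mult_mat_vec[of _ p p _ p]) (use P D w in auto)
  also have "\<dots> = P *\<^sub>v ((D * D) *\<^sub>v (Pt *\<^sub>v (P *\<^sub>v w)))"
    by (rule assoc_mult_mat_vec[of _ p p _ p]) (use P D w Pt in auto)
  also have "\<dots> = P *\<^sub>v dvec w" using PtPv[OF w] DDv[OF w] by simp
  finally show ?thesis .
qed

lemma quadP: assumes a: "a \<in> carrier_vec p" and b: "b \<in> carrier_vec p"
  shows "(P *\<^sub>v a) \<bullet> (Theta *\<^sub>v (P *\<^sub>v b)) = (\<Sum>i<p. dd i * a $ i * b $ i)"
proof -
  have "(P *\<^sub>v a) \<bullet> (Theta *\<^sub>v (P *\<^sub>v b)) = a \<bullet> dvec b" using ThetaP[OF b] Psp[OF a] by simp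
  also have "\<dots> = (\<Sum>i<p. dd i * a $ i * b $ i)" using a unfolding dvec_def scalar_prod_def
    by (auto simp: atLeast0LessThan intro!: sum.cong)
  finally show ?thesis .
qed

lemma dd_pos: "i < p \<Longrightarrow> dd i > 0" unfolding dd_def using Dpos by simp

lemma dd_mono: assumes "i \<le> j" "j < p" shows "dd j \<le> dd i"
proof -
  have "D $$ (j,j) \<le> D $$ (i,i)" "D $$ (j,j) > 0" using Dord Dpos assms by auto
  thus ?thesis unfolding dd_def by (simp add: mult_mono)
qed

lemma sp_as_sum: "a \<in> carrier_vec p \<Longrightarrow> a \<bullet> a = (\<Sum>i<p. a $ i * a $ i)"
  unfolding scalar_prod_def by (simp add: atLeast0LessThan)

lemma Ay_bound: assumes y: "y \<in> carrier_vec q"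
  shows "g * (y \<bullet> (A *\<^sub>v y)) \<le> (A *\<^sub>v y) \<bullet> (A *\<^sub>v y)"
proof -
  let ?a = "y \<bullet> (A *\<^sub>v y)"
  have Ay: "A *\<^sub>v y \<in> carrier_vec q" using A y by simp
  have h1: "g * (y \<bullet> y) \<le> ?a" by (rule Glow[OF y])
  have h2: "?a^2 \<le> (y \<bullet> y) * ((A *\<^sub>v y) \<bullet> (A *\<^sub>v y))" by (rule cs_gen[OF y Ay])
  have "g * ?a * ?a \<le> ?a * ((A *\<^sub>v y) \<bullet> (A *\<^sub>v y))"
  proof -
    have "g * ?a * ?a = g * ?a^2" by (simp add: power2_eq_square)
    also have "\<dots> \<le> g * ((y \<bullet> y) * ((A *\<^sub>v y) \<bullet> (A *\<^sub>v y)))" using h2 g_pos by simp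
    also have "\<dots> = (g * (y \<bullet> y)) * ((A *\<^sub>v y) \<bullet> (A *\<^sub>v y))" by simp
    also have "\<dots> \<le> ?a * ((A *\<^sub>v y) \<bullet> (A *\<^sub>v y))" by (rule mult_right_mono[OF h1 sp_self_nonneg])
    finally show ?thesis .
  qed
  moreover have "?a \<ge> 0" using gram_sp[OF G y] sp_self_nonneg by simp
  ultimately show ?thesis
    by (cases "?a = 0") (auto simp: sp_self_nonneg mult.commute[of _ ?a] mult.assoc)
qed

lemma dd_top: assumes i: "i < q" shows "g \<le> dd i"
proof -
  define M where "M = mat (q - 1) q (\<lambda>(i,k). (Pt * G) $$ (i,k))"
  have M: "M \<in> carrier_mat (q - 1) q" unfolding M_def by simp
  obtain y where y: "y \<in> carrier_vec q" "y \<noteq> 0\<^sub>v q" "M *\<^sub>v y = 0\<^sub>v (q - 1)"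
    using kernel_exists[OF M] q by auto
  define z where "z = G *\<^sub>v y"
  have z: "z \<in> carrier_vec p" unfolding z_def using G y by simp
  have z0: "z \<noteq> 0\<^sub>v p" using fcr[OF y(1)] y(2) unfolding z_def by auto
  define h where "h = Pt *\<^sub>v z"
  have h: "h \<in> carrier_vec p" unfolding h_def using Pt z by simp
  have hz: "P *\<^sub>v h = z" unfolding h_def using PPtv[OF z] .
  have h0: "h $ k = 0" if k: "k < q - 1" for k
  proof -
    have "h = (Pt * G) *\<^sub>v y" unfolding h_def z_def using Pt G y by auto
    hence "h $ k = row (Pt * G) k \<bullet> y" using k q_le_p Pt G by simp
    also have "row (Pt * G) k = row M k" unfolding M_def using k q_le_p Pt G
      by (intro eq_vecI) auto
    also have "row M k \<bullet> y = (M *\<^sub>v y) $ k" using k M by simp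
    finally show ?thesis using y(3) k by simp
  qed
  have zz: "z \<bullet> z = h \<bullet> h" using Psp[OF h h] hz by simp
  have zzpos: "z \<bullet> z > 0" using sp_self_zero[OF z] z0 sp_self_nonneg[of z] by force
  have "z \<bullet> (Theta *\<^sub>v z) = (\<Sum>k<p. dd k * h $ k * h $ k)" using quadP[OF h h] hz by simp
  also have "\<dots> \<le> (\<Sum>k<p. dd (q - 1) * (h $ k * h $ k))"
  proof (rule sum_mono)
    fix k assume "k \<in> {..<p}"
    hence k: "k < p" by simp
    show "dd k * h $ k * h $ k \<le> dd (q - 1) * (h $ k * h $ k)"
    proof (cases "k < q - 1")
      case True thus ?thesis using h0 by simp
    next
      case False
      hence "dd k \<le> dd (q - 1)" using dd_mono k by simp
      thus ?thesis by (simp add: mult.assoc mult_right_mono)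
    qed
  qed
  also have "\<dots> = dd (q - 1) * (z \<bullet> z)" using zz sp_as_sum[OF h] by (simp add: sum_distrib_left)
  finally have up: "z \<bullet> (Theta *\<^sub>v z) \<le> dd (q - 1) * (z \<bullet> z)" .
  have Gtz: "Gt *\<^sub>v z = A *\<^sub>v y" unfolding z_def using G y by auto
  have "z \<bullet> (Theta *\<^sub>v z) = z \<bullet> (S *\<^sub>v z) + (Gt *\<^sub>v z) \<bullet> (Gt *\<^sub>v z)"
    using Thetav[OF z] S G z sp_transpose[OF G z, of "Gt *\<^sub>v z"]
    by (simp add: scalar_prod_add_distrib[of _ p])
  also have "\<dots> \<ge> (A *\<^sub>v y) \<bullet> (A *\<^sub>v y)" using Spsd[OF z] Gtz by simp
  finally have "(A *\<^sub>v y) \<bullet> (A *\<^sub>v y) \<le> z \<bullet> (Theta *\<^sub>v z)" .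
  moreover have "g * (z \<bullet> z) \<le> (A *\<^sub>v y) \<bullet> (A *\<^sub>v y)"
    using Ay_bound[OF y(1)] gram_sp[OF G y(1)] unfolding z_def by simp
  ultimately have "g * (z \<bullet> z) \<le> dd (q - 1) * (z \<bullet> z)" using up by simp
  hence "g \<le> dd (q - 1)" using zzpos by simp
  also have "dd (q - 1) \<le> dd i" using dd_mono[of i "q - 1"] i q q_le_p by simp
  finally show ?thesis .
qed

lemma dd_bot: assumes i: "q \<le> i" "i < p" shows "dd i \<le> \<sigma>"
proof -
  have qp: "q < p" using i by simp
  define M where "M = mat q (q + 1) (\<lambda>(k,i). (Gt * P) $$ (k,i))"
  have M: "M \<in> carrier_mat q (q + 1)" unfolding M_def by simp
  obtain cc where cc: "cc \<in> carrier_vec (q + 1)" "cc \<noteq> 0\<^sub>v (q + 1)" "M *\<^sub>v cc = 0\<^sub>v q"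
    using kernel_exists[OF M] by auto
  define h where "h = vec p (\<lambda>i. if i < q + 1 then cc $ i else 0)"
  have h: "h \<in> carrier_vec p" unfolding h_def by simp
  have hh: "h \<bullet> h = cc \<bullet> cc"
  proof -
    have "h \<bullet> h = (\<Sum>k<p. h $ k * h $ k)" by (rule sp_as_sum[OF h])
    also have "\<dots> = (\<Sum>k<q+1. cc $ k * cc $ k)"
      by (rule sum.mono_neutral_cong_right) (use qp in \<open>auto simp: h_def\<close>)
    also have "\<dots> = cc \<bullet> cc" using cc(1) unfolding scalar_prod_def by (simp add: atLeast0LessThan)
    finally show ?thesis .
  qed
  define z where "z = P *\<^sub>v h"
  have z: "z \<in> carrier_vec p" unfolding z_def using P h by simp
  have zz: "z \<bullet> z = cc \<bullet> cc" unfolding z_def using Psp[OF h h] hh by simp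
  have ccpos: "cc \<bullet> cc > 0" using sp_self_zero[OF cc(1)] cc(2) sp_self_nonneg[of cc] by force
  have Gtz: "Gt *\<^sub>v z = 0\<^sub>v q"
  proof (rule eq_vecI)
    fix k assume "k < dim_vec (0\<^sub>v q :: real vec)"
    hence k: "k < q" by simp
    have "(Gt *\<^sub>v z) $ k = ((Gt * P) *\<^sub>v h) $ k" unfolding z_def using Gt P h by auto
    also have "\<dots> = row (Gt * P) k \<bullet> h" using k Gt P by simp
    also have "\<dots> = (\<Sum>j<p. (Gt * P) $$ (k,j) * h $ j)"
      using Gt P h k unfolding scalar_prod_def by (simp add: atLeast0LessThan)
    also have "\<dots> = (\<Sum>j<q+1. (Gt * P) $$ (k,j) * cc $ j)"
      by (rule sum.mono_neutral_cong_right) (use qp in \<open>auto simp: h_def\<close>)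
    also have "\<dots> = row M k \<bullet> cc"
      using k cc(1) unfolding M_def scalar_prod_def by (simp add: atLeast0LessThan)
    also have "\<dots> = 0" using cc(3) k M by (metis index_mult_mat_vec carrier_matD(1) index_zero_vec(1))
    finally show "(Gt *\<^sub>v z) $ k = 0\<^sub>v q $ k" using k by simp
  qed (use Gt z in auto)
  have "z \<bullet> (Theta *\<^sub>v z) = z \<bullet> (S *\<^sub>v z) + (Gt *\<^sub>v z) \<bullet> (Gt *\<^sub>v z)"
    using Thetav[OF z] S G z sp_transpose[OF G z, of "Gt *\<^sub>v z"]
    by (simp add: scalar_prod_add_distrib[of _ p])
  also have "\<dots> \<le> \<sigma> * (z \<bullet> z)" using Sup[OF z] Gtz by simp
  finally have up: "z \<bullet> (Theta *\<^sub>v z) \<le> \<sigma> * (z \<bullet> z)" .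
  have "dd q * (z \<bullet> z) = (\<Sum>k<p. dd q * (h $ k * h $ k))"
    using zz hh sp_as_sum[OF h] by (simp add: sum_distrib_left[symmetric])
  also have "\<dots> \<le> (\<Sum>k<p. dd k * h $ k * h $ k)"
  proof (rule sum_mono)
    fix k assume "k \<in> {..<p}"
    hence k: "k < p" by simp
    show "dd q * (h $ k * h $ k) \<le> dd k * h $ k * h $ k"
    proof (cases "k < q + 1")
      case False thus ?thesis using k by (simp add: h_def)
    next
      case True
      hence "dd q \<le> dd k" using dd_mono qp by simp
      thus ?thesis by (simp add: mult.assoc mult_right_mono)
    qed
  qed
  also have "\<dots> = z \<bullet> (Theta *\<^sub>v z)" using quadP[OF h h] unfolding z_def by simp
  finally have "dd q * (z \<bullet> z) \<le> \<sigma> * (z \<bullet> z)" using up by simp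
  hence "dd q \<le> \<sigma>" using zz ccpos by simp
  moreover have "dd i \<le> dd q" using dd_mono i by simp
  ultimately show ?thesis by simp
qed

end

context setting begin

lemma A_sym_v: "a \<in> carrier_vec q \<Longrightarrow> b \<in> carrier_vec q \<Longrightarrow> a \<bullet> (A *\<^sub>v b) = (A *\<^sub>v a) \<bullet> b"
proof -
  assume a: "a \<in> carrier_vec q" and b: "b \<in> carrier_vec q"
  have "a \<bullet> (A *\<^sub>v b) = a \<bullet> (Gt *\<^sub>v (G *\<^sub>v b))" using G a b by auto
  also have "\<dots> = (G *\<^sub>v a) \<bullet> (G *\<^sub>v b)" using sp_transpose[OF Gt a, of "G *\<^sub>v b"] G b by simp
  also have "\<dots> = (Gt *\<^sub>v (G *\<^sub>v a)) \<bullet> b" using sp_transpose[OF G, of "G *\<^sub>v a" b] G a b by simp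
  also have "\<dots> = (A *\<^sub>v a) \<bullet> b" using G a b by auto
  finally show ?thesis .
qed

lemma A_det: "det A \<noteq> 0"
proof
  assume "det A = 0"
  then obtain y where y: "y \<in> carrier_vec q" "y \<noteq> 0\<^sub>v q" "A *\<^sub>v y = 0\<^sub>v q"
    using det_0_iff_vec_prod_zero[OF A] by blast
  have "(G *\<^sub>v y) \<bullet> (G *\<^sub>v y) = 0" using gram_sp[OF G y(1)] y by simp
  hence "G *\<^sub>v y = 0\<^sub>v p" using sp_self_zero[of "G *\<^sub>v y" p] G y by simp
  thus False using fcr y by blast
qed

definition Ai where "Ai = inv_mat A"

lemma Ai: "A * Ai = 1\<^sub>m q" "Ai * A = 1\<^sub>m q" "Ai \<in> carrier_mat q q"
proof -
  have "mat_inverse A \<noteq> None"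
    using mat_inverse(1)[OF A, where b="()"] det_non_zero_imp_unit[OF A A_det, where b="()"] by blast
  then obtain B where B: "mat_inverse A = Some B" by auto
  hence "Ai = B" unfolding Ai_def inv_mat_def by simp
  thus "A * Ai = 1\<^sub>m q" "Ai * A = 1\<^sub>m q" "Ai \<in> carrier_mat q q" using mat_inverse(2)[OF A B] by auto
qed

lemma A_Ai: assumes y: "y \<in> carrier_vec q" shows "A *\<^sub>v (Ai *\<^sub>v y) = y"
proof -
  have "A *\<^sub>v (Ai *\<^sub>v y) = (A * Ai) *\<^sub>v y" using assoc_mult_mat_vec[OF A Ai(3) y] by simp
  thus ?thesis using Ai(1) y by simp
qed
lemma Ai_A: assumes y: "y \<in> carrier_vec q" shows "Ai *\<^sub>v (A *\<^sub>v y) = y"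
proof -
  have "Ai *\<^sub>v (A *\<^sub>v y) = (Ai * A) *\<^sub>v y" using assoc_mult_mat_vec[OF Ai(3) A y] by simp
  thus ?thesis using Ai(2) y by simp
qed

lemma Ai_sym_v: assumes a: "a \<in> carrier_vec q" and b: "b \<in> carrier_vec q"
  shows "(Ai *\<^sub>v a) \<bullet> b = a \<bullet> (Ai *\<^sub>v b)"
proof -
  have "(Ai *\<^sub>v a) \<bullet> b = (Ai *\<^sub>v a) \<bullet> (A *\<^sub>v (Ai *\<^sub>v b))" using A_Ai[OF b] by simp
  also have "\<dots> = (A *\<^sub>v (Ai *\<^sub>v a)) \<bullet> (Ai *\<^sub>v b)" using A_sym_v Ai a b by simp
  also have "\<dots> = a \<bullet> (Ai *\<^sub>v b)" using A_Ai[OF a] by simp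
  finally show ?thesis .
qed

lemma Ai_bound: assumes y: "y \<in> carrier_vec q" shows "vnorm2 (Ai *\<^sub>v y) \<le> vnorm2 y / g"
proof -
  define z where "z = Ai *\<^sub>v y"
  have z: "z \<in> carrier_vec q" unfolding z_def using Ai y by simp
  have "g * (z \<bullet> z) \<le> z \<bullet> (A *\<^sub>v z)" by (rule Glow[OF z])
  also have "\<dots> = z \<bullet> y" unfolding z_def using A_Ai[OF y] by simp
  also have "\<dots> \<le> vnorm2 z * vnorm2 y" using cs[OF z y] by simp
  finally have "z \<bullet> z \<le> (vnorm2 y / g) * vnorm2 z" using g_pos by (simp add: field_simps)
  hence "vnorm2 z \<le> vnorm2 y / g" by (rule vnorm2_le_from_sp) (use g_pos vnorm2_nonneg in simp)
  thus ?thesis unfolding z_def .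
qed

lemma AiGt_bound: assumes w: "w \<in> carrier_vec p" shows "vnorm2 (Ai *\<^sub>v (Gt *\<^sub>v w)) \<le> vnorm2 w / sqrt g"
proof -
  define y where "y = Ai *\<^sub>v (Gt *\<^sub>v w)"
  have y: "y \<in> carrier_vec q" unfolding y_def using Ai Gt w by simp
  have Ay: "A *\<^sub>v y = Gt *\<^sub>v w" unfolding y_def using A_Ai Gt w by simp
  have e: "y \<bullet> (A *\<^sub>v y) = (G *\<^sub>v y) \<bullet> w" using Ay sp_transpose[OF Gt y w] G y by simp
  have Gy: "G *\<^sub>v y \<in> carrier_vec p" using G y by simp
  have "(G *\<^sub>v y) \<bullet> (G *\<^sub>v y) \<le> vnorm2 w * vnorm2 (G *\<^sub>v y)"
    using gram_sp[OF G y] e cs[OF Gy w] by (simp add: mult.commute)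
  hence Gyb: "vnorm2 (G *\<^sub>v y) \<le> vnorm2 w" by (rule vnorm2_le_from_sp) (use vnorm2_nonneg in simp)
  have "g * (y \<bullet> y) \<le> y \<bullet> (A *\<^sub>v y)" by (rule Glow[OF y])
  also have "\<dots> = (vnorm2 (G *\<^sub>v y))^2" using gram_sp[OF G y] vnorm2_sq by simp
  also have "\<dots> \<le> (vnorm2 w)^2" using Gyb vnorm2_nonneg by (simp add: power_mono)
  finally have "g * (vnorm2 y)^2 \<le> (vnorm2 w)^2" using vnorm2_sq by simp
  hence "(vnorm2 y)^2 \<le> (vnorm2 w / sqrt g)^2" using g_pos by (simp add: power_divide field_simps)
  hence "vnorm2 y \<le> vnorm2 w / sqrt g" using g_pos vnorm2_nonneg
    by (meson divide_nonneg_pos power2_le_imp_le real_sqrt_gt_zero)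
  thus ?thesis unfolding y_def .
qed

abbreviation "Pm \<equiv> proj_mat G"

lemma Pm: "Pm \<in> carrier_mat p p" unfolding proj_mat_def using G Ai(3)[unfolded Ai_def] by auto

lemma Pmv: assumes x: "x \<in> carrier_vec p" shows "Pm *\<^sub>v x = G *\<^sub>v (Ai *\<^sub>v (Gt *\<^sub>v x))"
proof -
  have "Pm = G * Ai * Gt" unfolding proj_mat_def Ai_def ..
  also have "\<dots> *\<^sub>v x = (G * Ai) *\<^sub>v (Gt *\<^sub>v x)"
    by (rule assoc_mult_mat_vec[of _ p q _ p]) (use G Ai(3) x in auto)
  also have "\<dots> = G *\<^sub>v (Ai *\<^sub>v (Gt *\<^sub>v x))"
    by (rule assoc_mult_mat_vec[of _ p q _ q]) (use G Ai(3) x in auto)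
  finally show ?thesis .
qed

lemma Pm_G: "y \<in> carrier_vec q \<Longrightarrow> Pm *\<^sub>v (G *\<^sub>v y) = G *\<^sub>v y"
proof -
  assume y: "y \<in> carrier_vec q"
  have "Gt *\<^sub>v (G *\<^sub>v y) = A *\<^sub>v y" using G y by auto
  thus ?thesis using Pmv[of "G *\<^sub>v y"] Ai_A[OF y] G y by simp
qed

lemma Gt_Pm: "x \<in> carrier_vec p \<Longrightarrow> Gt *\<^sub>v (Pm *\<^sub>v x) = Gt *\<^sub>v x"
proof -
  assume x: "x \<in> carrier_vec p"
  have "Gt *\<^sub>v (G *\<^sub>v (Ai *\<^sub>v (Gt *\<^sub>v x))) = A *\<^sub>v (Ai *\<^sub>v (Gt *\<^sub>v x))" using G Ai x by auto
  thus ?thesis using Pmv[OF x] A_Ai[of "Gt *\<^sub>v x"] Gt x by simp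
qed

lemma Pm_sym: assumes x: "x \<in> carrier_vec p" and w: "w \<in> carrier_vec p"
  shows "(Pm *\<^sub>v x) \<bullet> w = x \<bullet> (Pm *\<^sub>v w)"
proof -
  have c1: "Ai *\<^sub>v (Gt *\<^sub>v x) \<in> carrier_vec q" "Ai *\<^sub>v (Gt *\<^sub>v w) \<in> carrier_vec q"
    "Gt *\<^sub>v x \<in> carrier_vec q" "Gt *\<^sub>v w \<in> carrier_vec q" using Ai Gt x w by auto
  have "(Pm *\<^sub>v x) \<bullet> w = (G *\<^sub>v (Ai *\<^sub>v (Gt *\<^sub>v x))) \<bullet> w" using Pmv[OF x] by simp
  also have "\<dots> = w \<bullet> (G *\<^sub>v (Ai *\<^sub>v (Gt *\<^sub>v x)))" by (rule comm_scalar_prod[of _ p]) (use G c1 w in auto)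
  also have "\<dots> = (Gt *\<^sub>v w) \<bullet> (Ai *\<^sub>v (Gt *\<^sub>v x))" by (rule sp_transpose[OF G w c1(1)])
  also have "\<dots> = (Ai *\<^sub>v (Gt *\<^sub>v x)) \<bullet> (Gt *\<^sub>v w)" by (rule comm_scalar_prod[of _ q]) (use c1 in auto)
  also have "\<dots> = (Gt *\<^sub>v x) \<bullet> (Ai *\<^sub>v (Gt *\<^sub>v w))" by (rule Ai_sym_v[OF c1(3,4)])
  also have "\<dots> = x \<bullet> (G *\<^sub>v (Ai *\<^sub>v (Gt *\<^sub>v w)))" by (rule sp_transpose[OF G x c1(2), symmetric])
  also have "\<dots> = x \<bullet> (Pm *\<^sub>v w)" using Pmv[OF w] by simp
  finally show ?thesis .
qed

lemma Pm_idem: assumes x: "x \<in> carrier_vec p" shows "Pm *\<^sub>v (Pm *\<^sub>v x) = Pm *\<^sub>v x"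
proof -
  have c: "Ai *\<^sub>v (Gt *\<^sub>v x) \<in> carrier_vec q" using Ai Gt x by auto
  show ?thesis using Pmv[OF x] Pm_G[OF c] by simp
qed

definition Pp where "Pp x = x - Pm *\<^sub>v x"

lemma Pp_carrier: "x \<in> carrier_vec p \<Longrightarrow> Pp x \<in> carrier_vec p" unfolding Pp_def using Pm by simp

lemma Pm_Pp_split: "x \<in> carrier_vec p \<Longrightarrow> x = Pm *\<^sub>v x + Pp x"
  unfolding Pp_def using Pm by auto

lemma Pm_orth: assumes x: "x \<in> carrier_vec p" shows "(Pm *\<^sub>v x) \<bullet> Pp x = 0"
proof -
  have c: "Pm *\<^sub>v x \<in> carrier_vec p" using Pm x by simp
  have e1: "(Pm *\<^sub>v x) \<bullet> Pp x = (Pm *\<^sub>v x) \<bullet> x - (Pm *\<^sub>v x) \<bullet> (Pm *\<^sub>v x)"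
    unfolding Pp_def by (rule scalar_prod_minus_distrib[OF c x c])
  have e2: "(Pm *\<^sub>v x) \<bullet> (Pm *\<^sub>v x) = x \<bullet> (Pm *\<^sub>v (Pm *\<^sub>v x))" by (rule Pm_sym[OF x c])
  have e3: "(Pm *\<^sub>v x) \<bullet> x = x \<bullet> (Pm *\<^sub>v x)" by (rule comm_scalar_prod[OF c x])
  show ?thesis using e1 e2 e3 Pm_idem[OF x] by simp
qed

lemma Pm_pyth: assumes x: "x \<in> carrier_vec p" shows "x \<bullet> x = (Pm *\<^sub>v x) \<bullet> (Pm *\<^sub>v x) + Pp x \<bullet> Pp x"
proof -
  define a where "a = Pm *\<^sub>v x"
  define b where "b = Pp x"
  have a: "a \<in> carrier_vec p" and b: "b \<in> carrier_vec p" unfolding a_def b_def using Pm Pp_carrier x by auto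
  have xab: "x = a + b" unfolding a_def b_def by (rule Pm_Pp_split[OF x])
  have ab: "a \<bullet> b = 0" unfolding a_def b_def by (rule Pm_orth[OF x])
  have ba: "b \<bullet> a = 0" using ab comm_scalar_prod[OF a b] by simp
  have "(a + b) \<bullet> (a + b) = a \<bullet> (a + b) + b \<bullet> (a + b)" by (rule add_scalar_prod_distrib[OF a b]) (use a b in simp)
  also have "a \<bullet> (a + b) = a \<bullet> a + a \<bullet> b" by (rule scalar_prod_add_distrib[OF a a b])
  also have "b \<bullet> (a + b) = b \<bullet> a + b \<bullet> b" by (rule scalar_prod_add_distrib[OF b a b])
  finally have "(a + b) \<bullet> (a + b) = a \<bullet> a + b \<bullet> b" using ab ba by simp
  thus ?thesis using xab unfolding a_def b_def by simp
qed

lemma Pm_norm: assumes x: "x \<in> carrier_vec p" shows "vnorm2 (Pm *\<^sub>v x) \<le> vnorm2 x"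
proof -
  have "(Pm *\<^sub>v x) \<bullet> (Pm *\<^sub>v x) \<le> x \<bullet> x" using Pm_pyth[OF x] sp_self_nonneg[of "Pp x"] by linarith
  thus ?thesis unfolding vnorm2_def by simp
qed

lemma Pp_norm: assumes x: "x \<in> carrier_vec p" shows "vnorm2 (Pp x) \<le> vnorm2 x"
proof -
  have "Pp x \<bullet> Pp x \<le> x \<bullet> x" using Pm_pyth[OF x] sp_self_nonneg[of "Pm *\<^sub>v x"] by linarith
  thus ?thesis unfolding vnorm2_def by simp
qed

lemma Pp_G: "y \<in> carrier_vec q \<Longrightarrow> Pp (G *\<^sub>v y) = 0\<^sub>v p"
  unfolding Pp_def using Pm_G G by auto

lemma Pp_add: "x \<in> carrier_vec p \<Longrightarrow> y \<in> carrier_vec p \<Longrightarrow> Pp (x + y) = Pp x + Pp y"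
  unfolding Pp_def using Pm by (auto simp: mult_add_distrib_mat_vec[of _ p p])

definition rho :: real where "rho = rho1 S G"

lemma PmS: "x \<in> carrier_vec p \<Longrightarrow> vnorm2 (Pm *\<^sub>v (S *\<^sub>v x)) \<le> rho * vnorm2 x"
  unfolding rho_def rho1_def using op_norm_bound[of "Pm * S" p p x] Pm S by auto

lemma rho_nonneg: "rho \<ge> 0" unfolding rho_def rho1_def using op_norm_nonneg[of "Pm * S" p p] Pm S p by auto

lemma SPm: "x \<in> carrier_vec p \<Longrightarrow> vnorm2 (S *\<^sub>v (Pm *\<^sub>v x)) \<le> rho * vnorm2 x"
proof (rule adjoint_bound[where F="\<lambda>w. Pm *\<^sub>v (S *\<^sub>v w)" and m=p and n=p])
  fix x w :: "real vec" assume x: "x \<in> carrier_vec p" and w: "w \<in> carrier_vec p"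
  show "(S *\<^sub>v (Pm *\<^sub>v x)) \<bullet> w = x \<bullet> (Pm *\<^sub>v (S *\<^sub>v w))"
    using sym_sp[OF S Ss, of w "Pm *\<^sub>v x"] Pm_sym[OF x, of "S *\<^sub>v w"] Pm S x w
    comm_scalar_prod[of "S *\<^sub>v (Pm *\<^sub>v x)" p w] comm_scalar_prod[of "Pm *\<^sub>v x" p "S *\<^sub>v w"] by simp
qed (use Pm S PmS rho_nonneg in auto)

lemma S_norm: "x \<in> carrier_vec p \<Longrightarrow> vnorm2 (S *\<^sub>v x) \<le> \<sigma> * vnorm2 x"
  by (rule psd_norm_bound[OF S Ss Spsd Sup _ \<sigma>0])

end

lemma vnorm2_comp: assumes a: "(a::real vec) \<in> carrier_vec n" and b: "b \<in> carrier_vec n" and k: "k \<ge> 0"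
  and h: "\<And>i. i < n \<Longrightarrow> \<bar>a $ i\<bar> \<le> k * \<bar>b $ i\<bar>"
  shows "vnorm2 a \<le> k * vnorm2 b"
proof -
  have "a \<bullet> a = (\<Sum>i<n. a $ i * a $ i)" using a unfolding scalar_prod_def by (simp add: atLeast0LessThan)
  also have "\<dots> \<le> (\<Sum>i<n. k^2 * (b $ i * b $ i))"
  proof (rule sum_mono)
    fix i assume "i \<in> {..<n}"
    hence "\<bar>a $ i\<bar> \<le> k * \<bar>b $ i\<bar>" using h by simp
    hence "\<bar>a $ i\<bar>^2 \<le> (k * \<bar>b $ i\<bar>)^2" by (rule power_mono) simp
    thus "a $ i * a $ i \<le> k^2 * (b $ i * b $ i)" by (simp add: power2_eq_square power_mult_distrib algebra_simps)
  qed
  also have "\<dots> = k^2 * (b \<bullet> b)" using b unfolding scalar_prod_def by (simp add: atLeast0LessThan sum_distrib_left)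
  finally have "(vnorm2 a)^2 \<le> (k * vnorm2 b)^2" by (simp add: vnorm2_sq power_mult_distrib)
  thus ?thesis using k vnorm2_nonneg by (meson mult_nonneg_nonneg power2_le_imp_le)
qed

context setting begin

definition tp :: "real vec \<Rightarrow> real vec" where "tp w = vec p (\<lambda>i. if i < q then w $ i else 0)"
definition bt :: "real vec \<Rightarrow> real vec" where "bt w = vec p (\<lambda>i. if i < q then 0 else w $ i)"
definition uu where "uu x = P *\<^sub>v tp (Pt *\<^sub>v x)"
definition vv where "vv x = P *\<^sub>v bt (Pt *\<^sub>v x)"

lemma tp_carrier[simp]: "tp w \<in> carrier_vec p" unfolding tp_def by simp
lemma bt_carrier[simp]: "bt w \<in> carrier_vec p" unfolding bt_def by simp
lemma uu_carrier[simp]: "uu x \<in> carrier_vec p" unfolding uu_def using P by simp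
lemma vv_carrier[simp]: "vv x \<in> carrier_vec p" unfolding vv_def using P by simp

lemma tp_bt: "w \<in> carrier_vec p \<Longrightarrow> tp w + bt w = w"
  unfolding tp_def bt_def by (intro eq_vecI) auto

lemma tp_norm: "w \<in> carrier_vec p \<Longrightarrow> vnorm2 (tp w) \<le> vnorm2 w"
  using vnorm2_comp[of "tp w" p w 1] by (simp add: tp_def)
lemma bt_norm: "w \<in> carrier_vec p \<Longrightarrow> vnorm2 (bt w) \<le> vnorm2 w"
  using vnorm2_comp[of "bt w" p w 1] by (simp add: bt_def)

lemma uu_vv: assumes x: "x \<in> carrier_vec p" shows "uu x + vv x = x"
proof -
  have w: "Pt *\<^sub>v x \<in> carrier_vec p" using Pt x by simp
  have "uu x + vv x = P *\<^sub>v (tp (Pt *\<^sub>v x) + bt (Pt *\<^sub>v x))" unfolding uu_def vv_def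
    by (rule mult_add_distrib_mat_vec[symmetric, OF P]) auto
  also have "\<dots> = x" using tp_bt[OF w] PPtv[OF x] by simp
  finally show ?thesis .
qed

lemma uu_norm: "x \<in> carrier_vec p \<Longrightarrow> vnorm2 (uu x) \<le> vnorm2 x"
  unfolding uu_def using Pnorm[of "tp (Pt *\<^sub>v x)"] tp_norm[of "Pt *\<^sub>v x"] Ptnorm[of x] Pt by simp
lemma vv_norm: "x \<in> carrier_vec p \<Longrightarrow> vnorm2 (vv x) \<le> vnorm2 x"
  unfolding vv_def using Pnorm[of "bt (Pt *\<^sub>v x)"] bt_norm[of "Pt *\<^sub>v x"] Ptnorm[of x] Pt by simp

lemma tp_adj: "a \<in> carrier_vec p \<Longrightarrow> b \<in> carrier_vec p \<Longrightarrow> tp a \<bullet> b = a \<bullet> tp b"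
  unfolding tp_def scalar_prod_def by (auto intro!: sum.cong)

lemma uu_adj: assumes x: "x \<in> carrier_vec p" and y: "y \<in> carrier_vec p" shows "uu x \<bullet> y = x \<bullet> uu y"
proof -
  have "uu x \<bullet> y = tp (Pt *\<^sub>v x) \<bullet> (Pt *\<^sub>v y)" unfolding uu_def by (rule Padj) (use y in auto)
  also have "\<dots> = (Pt *\<^sub>v x) \<bullet> tp (Pt *\<^sub>v y)" by (rule tp_adj) (use Pt x y in auto)
  also have "\<dots> = tp (Pt *\<^sub>v y) \<bullet> (Pt *\<^sub>v x)" by (rule comm_scalar_prod[of _ p]) (use Pt x in auto)
  also have "\<dots> = uu y \<bullet> x" unfolding uu_def by (rule Padj[symmetric]) (use x in auto)
  also have "\<dots> = x \<bullet> uu y" by (rule comm_scalar_prod[of _ p]) (use x in auto)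
  finally show ?thesis .
qed

lemma uu_idem: "uu (uu x) = uu x"
proof -
  have "Pt *\<^sub>v uu x = tp (Pt *\<^sub>v x)" unfolding uu_def by (rule PtPv) simp
  moreover have "tp (tp w) = tp w" for w unfolding tp_def by (intro eq_vecI) auto
  ultimately show ?thesis unfolding uu_def[of "uu x"] by (simp add: uu_def)
qed

lemma uu_add: "x \<in> carrier_vec p \<Longrightarrow> y \<in> carrier_vec p \<Longrightarrow> uu (x + y) = uu x + uu y"
proof -
  assume x: "x \<in> carrier_vec p" and y: "y \<in> carrier_vec p"
  have "Pt *\<^sub>v (x + y) = Pt *\<^sub>v x + Pt *\<^sub>v y" using Pt x y by (simp add: mult_add_distrib_mat_vec[of _ p p])
  moreover have "tp (a + b) = tp a + tp b" if "a \<in> carrier_vec p" "b \<in> carrier_vec p" for a b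
    unfolding tp_def using that by (intro eq_vecI) auto
  ultimately show ?thesis unfolding uu_def using Pt x y P by (simp add: mult_add_distrib_mat_vec[of _ p p])
qed

lemma Pp_sym: assumes x: "x \<in> carrier_vec p" and w: "w \<in> carrier_vec p" shows "Pp x \<bullet> w = x \<bullet> Pp w"
proof -
  have "Pp x \<bullet> w = x \<bullet> w - (Pm *\<^sub>v x) \<bullet> w" unfolding Pp_def
    by (rule minus_scalar_prod_distrib) (use x w Pm in auto)
  also have "(Pm *\<^sub>v x) \<bullet> w = x \<bullet> (Pm *\<^sub>v w)" by (rule Pm_sym[OF x w])
  also have "x \<bullet> w - x \<bullet> (Pm *\<^sub>v w) = x \<bullet> Pp w" unfolding Pp_def
    by (rule scalar_prod_minus_distrib[symmetric]) (use x w Pm in auto)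
  finally show ?thesis .
qed

definition s_b :: real where "s_b = (rho / g) / (1 - \<sigma> / g)"

lemma sg_lt: "\<sigma> / g < 1" using g_sigma g_pos by simp
lemma sg_ge: "0 \<le> \<sigma> / g" using \<sigma>0 g_pos by simp

lemma s_nonneg: "s_b \<ge> 0" unfolding s_b_def using rho_nonneg g_pos sg_lt by simp

lemma s_bound: "x \<in> carrier_vec p \<Longrightarrow> vnorm2 (Pp (uu x)) \<le> s_b * vnorm2 x"
proof -
  have main: "\<forall>x\<in>carrier_vec p. vnorm2 (Pp (uu x)) \<le> (rho / g) / (1 - \<sigma> / g) * vnorm2 x"
  proof (rule self_bound[where B=1])
    fix x :: "real vec" assume x: "x \<in> carrier_vec p"
    show "vnorm2 (Pp (uu x)) \<le> 1 * vnorm2 x" using Pp_norm[of "uu x"] uu_norm[OF x] by simp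
  next
    fix K :: real assume K0: "K \<ge> 0" and IH: "\<forall>x\<in>carrier_vec p. vnorm2 (Pp (uu x)) \<le> K * vnorm2 x"
    show "\<forall>x\<in>carrier_vec p. vnorm2 (Pp (uu x)) \<le> (rho / g + \<sigma> / g * K) * vnorm2 x"
    proof
      fix x :: "real vec" assume x: "x \<in> carrier_vec p"
      define w where "w = Pt *\<^sub>v x"
      have w: "w \<in> carrier_vec p" unfolding w_def using Pt x by simp
      define t' where "t' = vec p (\<lambda>i. if i < q then w $ i / dd i else 0)"
      have t': "t' \<in> carrier_vec p" unfolding t'_def by simp
      define z where "z = P *\<^sub>v t'"
      have z: "z \<in> carrier_vec p" unfolding z_def using P t' by simp
      have dt: "dvec t' = tp w" unfolding dvec_def t'_def tp_def
        by (intro eq_vecI) (auto simp: dd_pos[THEN less_imp_neq, symmetric] dest: dd_pos)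
      have ux: "uu x = Theta *\<^sub>v z" unfolding uu_def z_def w_def[symmetric] using ThetaP[OF t'] dt by simp
      have Gtz: "Gt *\<^sub>v z \<in> carrier_vec q" using Gt z by simp
      have c1: "S *\<^sub>v (Pm *\<^sub>v z) \<in> carrier_vec p" "S *\<^sub>v Pp z \<in> carrier_vec p" "G *\<^sub>v (Gt *\<^sub>v z) \<in> carrier_vec p"
        using S Pm z Pp_carrier G Gt by auto
      have Sz: "S *\<^sub>v z = S *\<^sub>v (Pm *\<^sub>v z) + S *\<^sub>v Pp z"
        using Pm_Pp_split[OF z] S Pm z Pp_carrier[OF z]
        by (metis mult_add_distrib_mat_vec mult_mat_vec_carrier)
      have "Pp (uu x) = Pp (S *\<^sub>v (Pm *\<^sub>v z)) + Pp (S *\<^sub>v Pp z)"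
        using ux Thetav[OF z] Sz Pp_add c1 Pp_G[OF Gtz] Pp_carrier[OF c1(2)] by simp
      hence "vnorm2 (Pp (uu x)) \<le> vnorm2 (Pp (S *\<^sub>v (Pm *\<^sub>v z))) + vnorm2 (Pp (S *\<^sub>v Pp z))"
        using vnorm2_add[of _ p] Pp_carrier c1 by simp
      also have "\<dots> \<le> vnorm2 (S *\<^sub>v (Pm *\<^sub>v z)) + vnorm2 (S *\<^sub>v Pp z)"
        using Pp_norm c1 by (simp add: add_mono)
      also have "\<dots> \<le> rho * vnorm2 z + \<sigma> * vnorm2 (Pp z)"
        using SPm[OF z] S_norm[OF Pp_carrier[OF z]] by (simp add: add_mono)
      also have "Pp z = Pp (uu z)"
      proof -
        have "tp t' = t'" unfolding t'_def tp_def by (intro eq_vecI) auto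
        hence "uu z = z" unfolding uu_def z_def using PtPv[OF t'] by simp
        thus ?thesis by simp
      qed
      also have "rho * vnorm2 z + \<sigma> * vnorm2 (Pp (uu z)) \<le> rho * vnorm2 z + \<sigma> * (K * vnorm2 z)"
        using IH z \<sigma>0 by (simp add: mult_left_mono)
      also have "vnorm2 z \<le> vnorm2 x / g"
      proof -
        have "vnorm2 z = vnorm2 t'" unfolding z_def by (rule Pnorm[OF t'])
        also have "\<dots> \<le> (1/g) * vnorm2 w"
        proof (rule vnorm2_comp[OF t' w])
          fix i assume i: "i < p"
          show "\<bar>t' $ i\<bar> \<le> 1 / g * \<bar>w $ i\<bar>"
          proof (cases "i < q")
            case True
            have dp: "dd i > 0" using dd_pos i by simp
            have "g \<le> dd i" using dd_top True by simp
            hence "\<bar>w $ i\<bar> / dd i \<le> \<bar>w $ i\<bar> / g" using g_pos by (simp add: frac_le)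
            thus ?thesis using True i dp unfolding t'_def by (simp add: abs_div)
          qed (use i g_pos in \<open>auto simp: t'_def\<close>)
        qed (use g_pos in simp)
        also have "vnorm2 w = vnorm2 x" unfolding w_def by (rule Ptnorm[OF x])
        finally show ?thesis by simp
      qed
      hence "rho * vnorm2 z + \<sigma> * (K * vnorm2 z) \<le> rho * (vnorm2 x / g) + \<sigma> * (K * (vnorm2 x / g))"
        using rho_nonneg \<sigma>0 K0 by (intro add_mono mult_left_mono) (auto intro: mult_nonneg_nonneg)
      also have "\<dots> = (rho / g + \<sigma> / g * K) * vnorm2 x" by (simp add: algebra_simps)
      finally show "vnorm2 (Pp (uu x)) \<le> (rho / g + \<sigma> / g * K) * vnorm2 x" .
    qed
  qed (use sg_lt sg_ge rho_nonneg g_pos in auto)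
  thus "x \<in> carrier_vec p \<Longrightarrow> vnorm2 (Pp (uu x)) \<le> s_b * vnorm2 x" unfolding s_b_def by blast
qed

end

lemma vnorm2_minus: assumes a: "(a::real vec) \<in> carrier_vec n" and b: "b \<in> carrier_vec n"
  shows "vnorm2 (a - b) \<le> vnorm2 a + vnorm2 b"
proof -
  have "a - b = a + (-1) \<cdot>\<^sub>v b" using a b by (intro eq_vecI) auto
  hence "vnorm2 (a - b) \<le> vnorm2 a + vnorm2 ((-1) \<cdot>\<^sub>v b)" using vnorm2_add[OF a, of "(-1) \<cdot>\<^sub>v b"] b by simp
  thus ?thesis by (simp add: vnorm2_smult)
qed

context setting begin

definition kap :: real where "kap = rho + \<sigma> * s_b"

lemma kap_nonneg: "kap \<ge> 0" unfolding kap_def using rho_nonneg \<sigma>0 s_nonneg by simp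

lemma Su_bound: assumes y: "y \<in> carrier_vec p" shows "vnorm2 (S *\<^sub>v uu y) \<le> kap * vnorm2 y"
proof -
  have c: "Pm *\<^sub>v uu y \<in> carrier_vec p" "Pp (uu y) \<in> carrier_vec p" using Pm Pp_carrier by auto
  have "S *\<^sub>v uu y = S *\<^sub>v (Pm *\<^sub>v uu y) + S *\<^sub>v Pp (uu y)"
    using Pm_Pp_split[of "uu y"] mult_add_distrib_mat_vec[OF S c] by simp
  hence "vnorm2 (S *\<^sub>v uu y) \<le> vnorm2 (S *\<^sub>v (Pm *\<^sub>v uu y)) + vnorm2 (S *\<^sub>v Pp (uu y))"
    using vnorm2_add[of _ p] S c by simp
  also have "\<dots> \<le> rho * vnorm2 (uu y) + \<sigma> * vnorm2 (Pp (uu y))"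
    using SPm[of "uu y"] S_norm[OF c(2)] by (simp add: add_mono)
  also have "\<dots> \<le> rho * vnorm2 y + \<sigma> * (s_b * vnorm2 y)"
    using uu_norm[OF y] s_bound[OF y] rho_nonneg \<sigma>0 by (intro add_mono mult_left_mono) auto
  also have "\<dots> = kap * vnorm2 y" unfolding kap_def by (simp add: algebra_simps)
  finally show ?thesis .
qed

lemma uS_bound: assumes w: "w \<in> carrier_vec p" shows "vnorm2 (uu (S *\<^sub>v w)) \<le> kap * vnorm2 w"
proof (rule adjoint_bound[where F="\<lambda>x. S *\<^sub>v uu x" and m=p and n=p and H="\<lambda>w. uu (S *\<^sub>v w)"])
  fix x w :: "real vec" assume x: "x \<in> carrier_vec p" and w: "w \<in> carrier_vec p"
  have "uu (S *\<^sub>v x) \<bullet> w = (S *\<^sub>v x) \<bullet> uu w" by (rule uu_adj) (use S x w in auto)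
  also have "\<dots> = x \<bullet> (S *\<^sub>v uu w)" using sym_sp[OF S Ss x, of "uu w"] by simp
  finally show "uu (S *\<^sub>v x) \<bullet> w = x \<bullet> (S *\<^sub>v uu w)" .
qed (use S w Su_bound kap_nonneg in auto)

lemma uPp_bound: assumes e: "e \<in> carrier_vec p" shows "vnorm2 (uu (Pp e)) \<le> s_b * vnorm2 e"
proof (rule adjoint_bound[where F="\<lambda>x. Pp (uu x)" and m=p and n=p and H="\<lambda>w. uu (Pp w)"])
  fix x w :: "real vec" assume x: "x \<in> carrier_vec p" and w: "w \<in> carrier_vec p"
  have "uu (Pp x) \<bullet> w = Pp x \<bullet> uu w" by (rule uu_adj) (use Pp_carrier x w in auto)
  also have "\<dots> = x \<bullet> Pp (uu w)" by (rule Pp_sym) (use x in auto)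
  finally show "uu (Pp x) \<bullet> w = x \<bullet> Pp (uu w)" .
qed (use e s_bound s_nonneg Pp_carrier in auto)

lemma uu_e_bound: assumes e: "e \<in> carrier_vec p" shows "vnorm2 (uu e) \<le> vnorm2 (Pm *\<^sub>v e) + s_b * vnorm2 e"
proof -
  have "uu e = uu (Pm *\<^sub>v e) + uu (Pp e)" using Pm_Pp_split[OF e] uu_add[of "Pm *\<^sub>v e" "Pp e"] Pm e Pp_carrier
    by (metis mult_mat_vec_carrier)
  hence "vnorm2 (uu e) \<le> vnorm2 (uu (Pm *\<^sub>v e)) + vnorm2 (uu (Pp e))" using vnorm2_add[of _ p] by simp
  also have "\<dots> \<le> vnorm2 (Pm *\<^sub>v e) + s_b * vnorm2 e"
    using uu_norm[of "Pm *\<^sub>v e"] Pm e uPp_bound[OF e] by (simp add: add_mono)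
  finally show ?thesis .
qed

definition beta :: real where "beta = (rho / sqrt g) / (1 - \<sigma> / g)"

lemma vv_P: "cv \<in> carrier_vec p \<Longrightarrow> vv (P *\<^sub>v cv) = P *\<^sub>v bt cv"
  unfolding vv_def using PtPv by simp

lemma beta_bound: "x \<in> carrier_vec p \<Longrightarrow> vnorm2 (Gt *\<^sub>v vv x) \<le> beta * vnorm2 x"
proof -
  obtain B where B0: "B \<ge> 0" and B: "\<And>y. y\<in>carrier_vec p \<Longrightarrow> vnorm2 (Gt *\<^sub>v y) \<le> B * vnorm2 y"
    using mat_bound[OF Gt] by blast
  have main: "\<forall>x\<in>carrier_vec p. vnorm2 (Gt *\<^sub>v vv x) \<le> (rho / sqrt g) / (1 - \<sigma> / g) * vnorm2 x"
  proof (rule self_bound[where B=B])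
    fix x :: "real vec" assume x: "x \<in> carrier_vec p"
    show "vnorm2 (Gt *\<^sub>v vv x) \<le> B * vnorm2 x" using B[of "vv x"] vv_norm[OF x] B0
      by (meson mult_left_mono order_trans vv_carrier)
  next
    fix K :: real assume K0: "K \<ge> 0" and IH: "\<forall>x\<in>carrier_vec p. vnorm2 (Gt *\<^sub>v vv x) \<le> K * vnorm2 x"
    show "\<forall>x\<in>carrier_vec p. vnorm2 (Gt *\<^sub>v vv x) \<le> (rho / sqrt g + \<sigma> / g * K) * vnorm2 x"
    proof
      fix x :: "real vec" assume x: "x \<in> carrier_vec p"
      define b where "b = bt (Pt *\<^sub>v x)"
      have b: "b \<in> carrier_vec p" unfolding b_def by simp
      define z where "z = vv x"
      have z: "z \<in> carrier_vec p" and zPb: "z = P *\<^sub>v b" unfolding z_def vv_def b_def using P by auto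
      define w2 where "w2 = P *\<^sub>v dvec b"
      have w2: "w2 \<in> carrier_vec p" unfolding w2_def using P by simp
      have Tz: "Theta *\<^sub>v z = w2" unfolding zPb w2_def by (rule ThetaP[OF b])
      have bdb: "bt (dvec b) = dvec b" unfolding bt_def dvec_def b_def by (intro eq_vecI) auto
      have vw2: "vv w2 = w2" unfolding w2_def using vv_P[of "dvec b"] bdb by simp
      have c: "Gt *\<^sub>v z \<in> carrier_vec q" "S *\<^sub>v z \<in> carrier_vec p" "Gt *\<^sub>v (S *\<^sub>v z) \<in> carrier_vec q"
        "Gt *\<^sub>v w2 \<in> carrier_vec q" using Gt S z w2 by auto
      have "Gt *\<^sub>v w2 = Gt *\<^sub>v (S *\<^sub>v z) + Gt *\<^sub>v (G *\<^sub>v (Gt *\<^sub>v z))"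
        using Tz[symmetric] Thetav[OF z] mult_add_distrib_mat_vec[OF Gt] c G by simp
      also have "Gt *\<^sub>v (G *\<^sub>v (Gt *\<^sub>v z)) = A *\<^sub>v (Gt *\<^sub>v z)" using G c by auto
      finally have e1: "A *\<^sub>v (Gt *\<^sub>v z) = Gt *\<^sub>v w2 - Gt *\<^sub>v (S *\<^sub>v z)"
        using c A by auto
      have "Gt *\<^sub>v z = Ai *\<^sub>v (A *\<^sub>v (Gt *\<^sub>v z))" using Ai_A[OF c(1)] by simp
      also have "\<dots> = Ai *\<^sub>v (Gt *\<^sub>v w2) - Ai *\<^sub>v (Gt *\<^sub>v (S *\<^sub>v z))"
        unfolding e1 by (rule mult_minus_distrib_mat_vec[OF Ai(3) c(4) c(3)])
      also have "Gt *\<^sub>v (S *\<^sub>v z) = Gt *\<^sub>v (Pm *\<^sub>v (S *\<^sub>v z))" using Gt_Pm[OF c(2)] by simp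
      finally have e2: "Gt *\<^sub>v z = Ai *\<^sub>v (Gt *\<^sub>v w2) - Ai *\<^sub>v (Gt *\<^sub>v (Pm *\<^sub>v (S *\<^sub>v z)))" .
      have f1: "vnorm2 (Gt *\<^sub>v z) \<le> vnorm2 (Ai *\<^sub>v (Gt *\<^sub>v w2)) + vnorm2 (Ai *\<^sub>v (Gt *\<^sub>v (Pm *\<^sub>v (S *\<^sub>v z))))"
        unfolding e2 by (rule vnorm2_minus[of _ q]) (use Ai Gt Pm c in auto)
      have f2: "vnorm2 (Ai *\<^sub>v (Gt *\<^sub>v w2)) \<le> vnorm2 (Gt *\<^sub>v w2) / g" by (rule Ai_bound[OF c(4)])
      have f3: "vnorm2 (Ai *\<^sub>v (Gt *\<^sub>v (Pm *\<^sub>v (S *\<^sub>v z)))) \<le> vnorm2 (Pm *\<^sub>v (S *\<^sub>v z)) / sqrt g"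
        by (rule AiGt_bound) (use Pm c in auto)
      have f4: "vnorm2 (Gt *\<^sub>v w2) \<le> K * vnorm2 w2" using IH w2 vw2 by metis
      have f5: "vnorm2 w2 \<le> \<sigma> * vnorm2 x"
      proof -
        have "vnorm2 w2 = vnorm2 (dvec b)" unfolding w2_def by (rule Pnorm) simp
        also have "\<dots> \<le> \<sigma> * vnorm2 b"
        proof (rule vnorm2_comp[OF _ b \<sigma>0])
          fix i assume i: "i < p"
          show "\<bar>dvec b $ i\<bar> \<le> \<sigma> * \<bar>b $ i\<bar>"
          proof (cases "i < q")
            case True thus ?thesis using i unfolding dvec_def b_def bt_def by simp
          next
            case False
            hence "dd i \<le> \<sigma>" "dd i > 0" using dd_bot dd_pos i by auto
            thus ?thesis using i unfolding dvec_def by (simp add: abs_mult mult_right_mono)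
          qed
        qed simp
        also have "vnorm2 b \<le> vnorm2 x" unfolding b_def using bt_norm[of "Pt *\<^sub>v x"] Ptnorm[OF x] Pt x by simp
        finally show ?thesis using \<sigma>0 by (simp add: mult_left_mono)
      qed
      have f6: "vnorm2 (Pm *\<^sub>v (S *\<^sub>v z)) \<le> rho * vnorm2 x"
      proof -
        have "vnorm2 (Pm *\<^sub>v (S *\<^sub>v z)) \<le> rho * vnorm2 z" by (rule PmS[OF z])
        also have "\<dots> \<le> rho * vnorm2 x" using vv_norm[OF x] rho_nonneg unfolding z_def by (simp add: mult_left_mono)
        finally show ?thesis .
      qed
      have f45: "vnorm2 (Gt *\<^sub>v w2) \<le> K * (\<sigma> * vnorm2 x)"
        using f4 mult_left_mono[OF f5 K0] by linarith
      have f7: "vnorm2 (Gt *\<^sub>v w2) / g \<le> K * (\<sigma> * vnorm2 x) / g"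
        using f45 g_pos by (simp add: divide_right_mono)
      have f8: "vnorm2 (Pm *\<^sub>v (S *\<^sub>v z)) / sqrt g \<le> rho * vnorm2 x / sqrt g"
        using f6 by (rule divide_right_mono) (use g_pos in simp)
      have "vnorm2 (Gt *\<^sub>v z) \<le> K * (\<sigma> * vnorm2 x) / g + rho * vnorm2 x / sqrt g"
        using f1 f2 f3 f7 f8 by linarith
      also have "\<dots> = (rho / sqrt g + \<sigma> / g * K) * vnorm2 x" by (simp add: algebra_simps)
      finally show "vnorm2 (Gt *\<^sub>v vv x) \<le> (rho / sqrt g + \<sigma> / g * K) * vnorm2 x" unfolding z_def .
    qed
  qed (use sg_lt sg_ge rho_nonneg g_pos in auto)
  thus "x \<in> carrier_vec p \<Longrightarrow> vnorm2 (Gt *\<^sub>v vv x) \<le> beta * vnorm2 x" unfolding beta_def by blast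
qed

end

lemma entry_unit: assumes M: "(M::real mat) \<in> carrier_mat n n" and j: "j < n" and k: "k < n"
  shows "M $$ (j,k) = unit_vec n j \<bullet> (M *\<^sub>v unit_vec n k)"
proof -
  have "unit_vec n j \<bullet> (M *\<^sub>v unit_vec n k) = (M *\<^sub>v unit_vec n k) $ j"
    by (rule scalar_prod_left_unit) (use M j in auto)
  also have "\<dots> = row M j \<bullet> unit_vec n k" using M j by simp
  also have "\<dots> = M $$ (j,k)" using M j k by (simp add: scalar_prod_right_unit)
  finally show ?thesis by simp
qed

context setting begin

lemma DD_entry: assumes i: "i < p" and j: "j < p" shows "(D * D) $$ (i,j) = (if i = j then dd i else 0)"
proof -
  have "(D * D) $$ (i,j) = (\<Sum>l\<in>{0..<p}. D $$ (i,l) * D $$ (l,j))"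
    using D i j by (simp add: scalar_prod_def)
  also have "\<dots> = D $$ (i,i) * D $$ (i,j)"
    by (subst sum.remove[of _ i]) (use Ddiag D i j in \<open>auto simp: diagonal_mat_def intro!: sum.neutral\<close>)
  also have "\<dots> = (if i = j then dd i else 0)" unfolding dd_def using Ddiag D i j by (auto simp: diagonal_mat_def)
  finally show ?thesis .
qed

abbreviation "Hm \<equiv> H_trunc q (D * D)"

lemma Hm: "Hm \<in> carrier_mat p p" unfolding H_trunc_def using D by simp

lemma Hm_entry: assumes i: "i < p" and j: "j < p"
  shows "Hm $$ (i,j) = (if j = i \<and> \<not> i < q then dd i else 0)"
proof -
  have "Hm $$ (i,j) = (if i < q \<and> j < q then 0 else (D * D) $$ (i,j))"
    unfolding H_trunc_def using D i j by simp
  thus ?thesis using DD_entry[OF i j] by auto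
qed

lemma Hv: assumes w: "w \<in> carrier_vec p" shows "Hm *\<^sub>v w = dvec (bt w)"
proof (rule eq_vecI)
  fix i assume "i < dim_vec (dvec (bt w))"
  hence i: "i < p" unfolding dvec_def by simp
  have "(Hm *\<^sub>v w) $ i = (\<Sum>j\<in>{0..<p}. Hm $$ (i,j) * w $ j)"
    using Hm w i by (simp add: scalar_prod_def)
  also have "\<dots> = (\<Sum>j\<in>{0..<p}. (if j = i \<and> \<not> i < q then dd i * w $ i else 0))"
    using i by (intro sum.cong) (auto simp: Hm_entry)
  also have "\<dots> = (if \<not> i < q then dd i * w $ i else 0)" using i by (simp add: sum.delta')
  also have "\<dots> = dvec (bt w) $ i" using i unfolding dvec_def bt_def by simp
  finally show "(Hm *\<^sub>v w) $ i = dvec (bt w) $ i" .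
qed (use Hm in \<open>auto simp: dvec_def\<close>)

lemma main_quad: assumes x: "x \<in> carrier_vec p" and y: "y \<in> carrier_vec p"
  shows "x \<bullet> ((P * Hm * Pt) *\<^sub>v y) = vv x \<bullet> (Theta *\<^sub>v vv y)"
proof -
  have "(P * Hm * Pt) *\<^sub>v y = (P * Hm) *\<^sub>v (Pt *\<^sub>v y)"
    by (rule assoc_mult_mat_vec[of _ p p _ p]) (use P Hm y in auto)
  also have "\<dots> = P *\<^sub>v (Hm *\<^sub>v (Pt *\<^sub>v y))"
    by (rule assoc_mult_mat_vec[of _ p p _ p]) (use P Hm Pt y in auto)
  also have "\<dots> = P *\<^sub>v dvec (bt (Pt *\<^sub>v y))" using Hv Pt y by simp
  finally have e: "(P * Hm * Pt) *\<^sub>v y = P *\<^sub>v dvec (bt (Pt *\<^sub>v y))" .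
  have "x \<bullet> ((P * Hm * Pt) *\<^sub>v y) = (Pt *\<^sub>v x) \<bullet> dvec (bt (Pt *\<^sub>v y))"
    unfolding e by (rule sp_transpose[OF P x]) simp
  also have "\<dots> = (\<Sum>i<p. dd i * bt (Pt *\<^sub>v x) $ i * bt (Pt *\<^sub>v y) $ i)"
    using Pt x unfolding scalar_prod_def dvec_def bt_def by (auto simp: atLeast0LessThan intro!: sum.cong)
  also have "\<dots> = vv x \<bullet> (Theta *\<^sub>v vv y)" unfolding vv_def by (rule quadP[symmetric]) auto
  finally show ?thesis .
qed

lemma uS_le: assumes e: "e \<in> carrier_vec p" and w: "w \<in> carrier_vec p"
  shows "\<bar>uu e \<bullet> (S *\<^sub>v w)\<bar> \<le> vnorm2 (uu e) * (kap * vnorm2 w)"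
proof -
  have "uu e \<bullet> (S *\<^sub>v w) = uu (uu e) \<bullet> (S *\<^sub>v w)" using uu_idem by simp
  also have "\<dots> = uu e \<bullet> uu (S *\<^sub>v w)" by (rule uu_adj) (use S w in auto)
  finally have "\<bar>uu e \<bullet> (S *\<^sub>v w)\<bar> \<le> vnorm2 (uu e) * vnorm2 (uu (S *\<^sub>v w))" using cs[of "uu e" p] by simp
  also have "\<dots> \<le> vnorm2 (uu e) * (kap * vnorm2 w)" using uS_bound[OF w] vnorm2_nonneg by (rule mult_left_mono)
  finally show ?thesis .
qed

lemma entry_bound: assumes j: "j < p" and k: "k < p"
  shows "\<bar>(P * Hm * Pt - S) $$ (j,k)\<bar> \<le> beta^2 + 3 * kap * (rho2 G + s_b)"
proof -
  define ej :: "real vec" where "ej = unit_vec p j"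
  define ek :: "real vec" where "ek = unit_vec p k"
  have ej: "ej \<in> carrier_vec p" "vnorm2 ej = 1" unfolding ej_def vnorm2_def using j by auto
  have ek: "ek \<in> carrier_vec p" "vnorm2 ek = 1" unfolding ek_def vnorm2_def using k by auto
  have M1: "P * Hm * Pt \<in> carrier_mat p p" using P Hm by simp
  have "(P * Hm * Pt - S) $$ (j,k) = ej \<bullet> ((P * Hm * Pt - S) *\<^sub>v ek)"
    unfolding ej_def ek_def by (rule entry_unit) (use M1 S j k in auto)
  also have "\<dots> = ej \<bullet> ((P * Hm * Pt) *\<^sub>v ek) - ej \<bullet> (S *\<^sub>v ek)"
    using M1 S ej ek by (simp add: minus_mult_distrib_mat_vec[OF M1 S] scalar_prod_minus_distrib[of _ p])
  also have "ej \<bullet> ((P * Hm * Pt) *\<^sub>v ek) = vv ej \<bullet> (Theta *\<^sub>v vv ek)" by (rule main_quad[OF ej(1) ek(1)])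
  also have "\<dots> = vv ej \<bullet> (S *\<^sub>v vv ek) + (Gt *\<^sub>v vv ej) \<bullet> (Gt *\<^sub>v vv ek)"
    using Thetav[of "vv ek"] sp_transpose[OF G, of "vv ej" "Gt *\<^sub>v vv ek"] S G Gt
    by (simp add: scalar_prod_add_distrib[of _ p])
  also have "ej \<bullet> (S *\<^sub>v ek) = (uu ej + vv ej) \<bullet> (S *\<^sub>v (uu ek + vv ek))" using uu_vv ej ek by simp
  also have "\<dots> = uu ej \<bullet> (S *\<^sub>v uu ek) + uu ej \<bullet> (S *\<^sub>v vv ek) + vv ej \<bullet> (S *\<^sub>v uu ek) + vv ej \<bullet> (S *\<^sub>v vv ek)"
    using S by (simp add: mult_add_distrib_mat_vec[OF S] scalar_prod_add_distrib[of _ p] add_scalar_prod_distrib[of _ p])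
  finally have E: "(P * Hm * Pt - S) $$ (j,k) = (Gt *\<^sub>v vv ej) \<bullet> (Gt *\<^sub>v vv ek)
      - uu ej \<bullet> (S *\<^sub>v uu ek) - uu ej \<bullet> (S *\<^sub>v vv ek) - vv ej \<bullet> (S *\<^sub>v uu ek)" by simp
  have vsu: "vv ej \<bullet> (S *\<^sub>v uu ek) = uu ek \<bullet> (S *\<^sub>v vv ej)" by (rule sym_sp'[OF S Ss]) auto
  have ub: "vnorm2 (uu e) \<le> rho2 G + s_b" if e: "e \<in> {ej, ek}" for e
  proof -
    have ec: "e \<in> carrier_vec p" "vnorm2 e = 1" using e ej ek by auto
    have "vnorm2 (Pm *\<^sub>v e) \<le> rho2 G"
      using e rho2_bound[of j G] rho2_bound[of k G] G j k unfolding ej_def ek_def by auto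
    thus ?thesis using uu_e_bound[OF ec(1)] ec(2) by simp
  qed
  have u1: "vnorm2 (uu e) \<le> 1" if "e \<in> {ej, ek}" for e using uu_norm[of ej] uu_norm[of ek] that ej ek by auto
  have v1: "vnorm2 (vv e) \<le> 1" if "e \<in> {ej, ek}" for e using vv_norm[of ej] vv_norm[of ek] that ej ek by auto
  have b: "vnorm2 (Gt *\<^sub>v vv e) \<le> beta" if "e \<in> {ej, ek}" for e using beta_bound that ej ek by fastforce
  have beta0: "beta \<ge> 0" unfolding beta_def using rho_nonneg g_pos sg_lt by simp
  have r0: "rho2 G + s_b \<ge> 0" using rho2_nonneg s_nonneg by simp
  have t1: "\<bar>(Gt *\<^sub>v vv ej) \<bullet> (Gt *\<^sub>v vv ek)\<bar> \<le> beta^2"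
  proof -
    have "\<bar>(Gt *\<^sub>v vv ej) \<bullet> (Gt *\<^sub>v vv ek)\<bar> \<le> vnorm2 (Gt *\<^sub>v vv ej) * vnorm2 (Gt *\<^sub>v vv ek)"
      by (rule cs[of _ q]) (use Gt in auto)
    also have "\<dots> \<le> beta * beta" using b[of ej] b[of ek] vnorm2_nonneg beta0 by (intro mult_mono) auto
    finally show ?thesis by (simp add: power2_eq_square)
  qed
  have tb: "vnorm2 (uu e) * (kap * vnorm2 w) \<le> kap * (rho2 G + s_b)" if e: "e \<in> {ej, ek}" and w: "vnorm2 w \<le> 1" for e w
  proof -
    have "vnorm2 (uu e) * (kap * vnorm2 w) \<le> (rho2 G + s_b) * (kap * 1)"
      using ub[OF e] w kap_nonneg vnorm2_nonneg r0 by (intro mult_mono mult_left_mono) auto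
    thus ?thesis by (simp add: mult.commute)
  qed
  have t2: "\<bar>uu ej \<bullet> (S *\<^sub>v uu ek)\<bar> \<le> kap * (rho2 G + s_b)"
    using uS_le[OF ej(1), of "uu ek"] tb[of ej "uu ek"] u1[of ek] by auto
  have t3: "\<bar>uu ej \<bullet> (S *\<^sub>v vv ek)\<bar> \<le> kap * (rho2 G + s_b)"
    using uS_le[OF ej(1), of "vv ek"] tb[of ej "vv ek"] v1[of ek] by auto
  have t4: "\<bar>vv ej \<bullet> (S *\<^sub>v uu ek)\<bar> \<le> kap * (rho2 G + s_b)"
    using uS_le[OF ek(1), of "vv ej"] tb[of ek "vv ej"] v1[of ej] vsu by auto
  show ?thesis unfolding E using t1 t2 t3 t4 by linarith
qed

lemma final_arith: assumes gu: "gu \<ge> g"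
  shows "beta^2 + 3 * kap * (rho2 G + s_b)
     \<le> (3 * (1 + c/(c-1)) + (c/(c-1))^2 + 3 * (c/(c-1)) * (1 + c/(c-1))) * (rho * rho2 G + gu * rho^2 / g^2)"
proof -
  define k where "k = c / (c - 1)"
  define m where "m = 1 / (1 - \<sigma> / g)"
  define r2 where "r2 = rho2 G"
  have r20: "r2 \<ge> 0" unfolding r2_def by (rule rho2_nonneg)
  have k1: "k \<ge> 1" unfolding k_def using c1 by simp
  have rc: "\<sigma> / g \<le> 1 / c"
  proof -
    have "\<sigma> * c \<le> g" using gap by (simp add: mult.commute)
    thus ?thesis using g_pos c1 by (simp add: field_simps)
  qed
  have m0: "m > 0" unfolding m_def using sg_lt by simp
  have mk: "m \<le> k"
  proof -
    have "1 - 1/c \<le> 1 - \<sigma>/g" using rc by simp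
    moreover have "1 - 1/c > 0" using c1 by simp
    ultimately have "1 / (1 - \<sigma>/g) \<le> 1 / (1 - 1/c)"
      using sg_lt by (intro divide_left_mono) auto
    also have "1 / (1 - 1/c) = k" unfolding k_def using c1 by (simp add: field_simps)
    finally show ?thesis unfolding m_def .
  qed
  have rho0: "rho \<ge> 0" by (rule rho_nonneg)
  have sb: "s_b \<le> k * rho / g"
  proof -
    have "s_b = (rho / g) * m" unfolding s_b_def m_def by simp
    also have "\<dots> \<le> (rho / g) * k" using mk rho0 g_pos by (intro mult_left_mono) auto
    finally show ?thesis by (simp add: mult.commute)
  qed
  have bb: "beta^2 \<le> k^2 * rho^2 / g"
  proof -
    have "beta = (rho / sqrt g) * m" unfolding beta_def m_def by simp
    also have "\<dots> \<le> (rho / sqrt g) * k" using mk rho0 g_pos by (intro mult_left_mono) auto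
    finally have "beta \<le> k * rho / sqrt g" by (simp add: mult.commute)
    moreover have "beta \<ge> 0" unfolding beta_def using rho_nonneg g_pos sg_lt by simp
    ultimately have "beta^2 \<le> (k * rho / sqrt g)^2" by (simp add: power_mono)
    also have "\<dots> = k^2 * rho^2 / g" using g_pos by (simp add: power_divide power_mult_distrib)
    finally show ?thesis .
  qed
  have kb: "kap \<le> (1 + k) * rho"
  proof -
    have "\<sigma> * s_b \<le> \<sigma> * (k * rho / g)" using sb \<sigma>0 by (rule mult_left_mono)
    also have "\<dots> = (\<sigma> / g) * (k * rho)" by simp
    also have "\<dots> \<le> 1 * (k * rho)" using sg_lt k1 rho0 by (intro mult_right_mono) auto
    finally show ?thesis unfolding kap_def by (simp add: algebra_simps)
  qed
  have "3 * kap * (r2 + s_b) \<le> 3 * ((1 + k) * rho) * (r2 + k * rho / g)"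
    using kb sb kap_nonneg r20 s_nonneg by (intro mult_mono mult_left_mono add_left_mono) auto
  also have "\<dots> = 3 * (1 + k) * (rho * r2) + 3 * k * (1 + k) * (rho^2 / g)"
    by (simp add: algebra_simps power2_eq_square)
  finally have h1: "3 * kap * (r2 + s_b) \<le> 3 * (1 + k) * (rho * r2) + 3 * k * (1 + k) * (rho^2 / g)" .
  have h2: "rho^2 / g \<le> gu * rho^2 / g^2"
  proof -
    have "rho^2 / g = g * rho^2 / g^2" using g_pos by (simp add: power2_eq_square)
    also have "\<dots> \<le> gu * rho^2 / g^2" using gu g_pos by (intro divide_right_mono mult_right_mono) auto
    finally show ?thesis .
  qed
  have pos1: "rho * r2 \<ge> 0" using rho0 r20 by simp
  have pos2: "rho^2 / g \<ge> 0" using g_pos by simp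
  have "beta^2 + 3 * kap * (r2 + s_b) \<le> 3 * (1 + k) * (rho * r2) + (k^2 + 3 * k * (1 + k)) * (rho^2 / g)"
    using bb h1 by (simp add: algebra_simps)
  also have "\<dots> \<le> (3 * (1 + k) + k^2 + 3 * k * (1 + k)) * (rho * r2 + gu * rho^2 / g^2)"
  proof -
    have a1: "3 * (1 + k) * (rho * r2) \<le> (3 * (1 + k) + k^2 + 3 * k * (1 + k)) * (rho * r2)"
      using pos1 k1 by (intro mult_right_mono) auto
    have a2: "(k^2 + 3 * k * (1 + k)) * (rho^2 / g) \<le> (3 * (1 + k) + k^2 + 3 * k * (1 + k)) * (gu * rho^2 / g^2)"
    proof -
      have "(k^2 + 3 * k * (1 + k)) * (rho^2 / g) \<le> (k^2 + 3 * k * (1 + k)) * (gu * rho^2 / g^2)"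
        using h2 k1 by (intro mult_left_mono) auto
      also have "\<dots> \<le> (3 * (1 + k) + k^2 + 3 * k * (1 + k)) * (gu * rho^2 / g^2)"
        using h2 pos2 k1 by (intro mult_right_mono) auto
      finally show ?thesis .
    qed
    show ?thesis using a1 a2 by (simp add: algebra_simps)
  qed
  finally show ?thesis unfolding k_def r2_def .
qed

end

lemma Min_Max_empty: "Min ({}::real set) = Max {}"
  by (simp add: Min.eq_fold' Max.eq_fold')

lemma no_eig0: assumes "(A::real mat) \<in> carrier_mat 0 0" shows "{k. eigenvalue A k} = {}"
proof -
  have "v = 0\<^sub>v 0" if "v \<in> carrier_vec 0" for v :: "real vec" using that by (intro eq_vecI) auto
  thus ?thesis using assms unfolding eigenvalue_def eigenvector_def by auto
qed

lemma lam_empty: assumes "(A::real mat) \<in> carrier_mat 0 0" "(B::real mat) \<in> carrier_mat 0 0"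
  shows "lambda_min A = lambda_max B" "lambda_min A = lambda_min B" "lambda_max A = lambda_max B"
  unfolding lambda_min_def lambda_max_def no_eig0[OF assms(1)] no_eig0[OF assms(2)] Min_Max_empty by simp_all

lemma mult_zero_dim: assumes "(M::real mat) \<in> carrier_mat p 0" "N \<in> carrier_mat 0 p"
  shows "M * N = 0\<^sub>m p p"
  using assms by (intro eq_matI) (auto simp: scalar_prod_def)

theorem proposition1:
  fixes c s0 :: real
  assumes "c > 1" and "s0 > 0"
  shows "\<exists>C::real. \<forall>(p::nat) (q::nat) S G P D.
     sym_pos_def_mat S p \<and> G \<in> carrier_mat p q \<and> full_col_rank G \<and>
     P \<in> carrier_mat p p \<and> transpose_mat P * P = 1\<^sub>m p \<and>
     D \<in> carrier_mat p p \<and> diagonal_mat D \<and>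
     (\<forall>i j. i \<le> j \<and> j < p \<longrightarrow> D $$ (j,j) \<le> D $$ (i,i)) \<and>
     (\<forall>i<p. D $$ (i,i) > 0) \<and>
     S + G * transpose_mat G = P * (D * D) * transpose_mat P \<and>
     lambda_min S \<ge> s0 \<and>
     lambda_min (transpose_mat G * G) > c * lambda_max S
     \<longrightarrow> max_abs (P * H_trunc q (D * D) * transpose_mat P - S)
         \<le> C * (rho1 S G * rho2 G
               + lambda_max (transpose_mat G * G) * (rho1 S G)\<^sup>2
                 / (lambda_min (transpose_mat G * G))\<^sup>2)"
proof -
  define k where "k = c / (c - 1)"
  define C where "C = 3 * (1 + k) + k^2 + 3 * k * (1 + k)"
  have k1: "k \<ge> 1" unfolding k_def using assms(1) by simp
  have C0: "C \<ge> 0" unfolding C_def using k1 by simp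
  show ?thesis
  proof (rule exI[of _ C], intro allI impI)
    fix p q :: nat and S G P D :: "real mat"
    assume H: "sym_pos_def_mat S p \<and> G \<in> carrier_mat p q \<and> full_col_rank G \<and>
     P \<in> carrier_mat p p \<and> transpose_mat P * P = 1\<^sub>m p \<and>
     D \<in> carrier_mat p p \<and> diagonal_mat D \<and>
     (\<forall>i j. i \<le> j \<and> j < p \<longrightarrow> D $$ (j,j) \<le> D $$ (i,i)) \<and>
     (\<forall>i<p. D $$ (i,i) > 0) \<and>
     S + G * transpose_mat G = P * (D * D) * transpose_mat P \<and>
     lambda_min S \<ge> s0 \<and>
     lambda_min (transpose_mat G * G) > c * lambda_max S"
    from H have spd: "sym_pos_def_mat S p" and G: "G \<in> carrier_mat p q" and fcr: "full_col_rank G"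
      and P: "P \<in> carrier_mat p p" and PtP: "transpose_mat P * P = 1\<^sub>m p"
      and D: "D \<in> carrier_mat p p" and Dd: "diagonal_mat D"
      and Dord: "\<forall>i j. i \<le> j \<and> j < p \<longrightarrow> D $$ (j,j) \<le> D $$ (i,i)"
      and Dpos: "\<forall>i<p. D $$ (i,i) > 0"
      and dec: "S + G * transpose_mat G = P * (D * D) * transpose_mat P"
      and lS: "lambda_min S \<ge> s0" and lG: "lambda_min (transpose_mat G * G) > c * lambda_max S"
      by blast+
    from spd have S: "S \<in> carrier_mat p p" and Ss: "transpose_mat S = S"
      and Spd: "\<forall>x\<in>carrier_vec p. x \<noteq> 0\<^sub>v p \<longrightarrow> x \<bullet> (S *\<^sub>v x) > 0"
      unfolding sym_pos_def_mat_def by auto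
    have Spsd: "0 \<le> x \<bullet> (S *\<^sub>v x)" if x: "x \<in> carrier_vec p" for x
      using Spd x S by (cases "x = 0\<^sub>v p") (auto intro: less_imp_le)
    have A: "transpose_mat G * G \<in> carrier_mat q q" using G by simp
    have As: "transpose_mat (transpose_mat G * G) = transpose_mat G * G"
      using transpose_mult[of "transpose_mat G" q p G q] G by simp
    have fcr': "\<And>y. y \<in> carrier_vec q \<Longrightarrow> G *\<^sub>v y = 0\<^sub>v p \<Longrightarrow> y = 0\<^sub>v q"
      using fcr G unfolding full_col_rank_def by auto
    let ?E = "P * H_trunc q (D * D) * transpose_mat P - S"
    let ?R = "rho1 S G * rho2 G + lambda_max (transpose_mat G * G) * (rho1 S G)\<^sup>2
                 / (lambda_min (transpose_mat G * G))\<^sup>2"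
    show "max_abs ?E \<le> C * ?R"
    proof (cases "p = 0")
      case True
      have q0: "q = 0"
      proof (rule ccontr)
        assume "q \<noteq> 0"
        hence "unit_vec q 0 \<in> carrier_vec q" "unit_vec q 0 \<noteq> (0\<^sub>v q :: real vec)"
          by (auto simp: vec_eq_iff)
        moreover have "G *\<^sub>v unit_vec q 0 = 0\<^sub>v p" using G True by (intro eq_vecI) auto
        ultimately show False using fcr' by blast
      qed
      have S0: "S \<in> carrier_mat 0 0" using S True by simp
      have A0: "transpose_mat G * G \<in> carrier_mat 0 0" using A q0 by simp
      have e1: "lambda_min S = lambda_max S" using lam_empty[OF S0 S0] by simp
      have e2: "lambda_min (transpose_mat G * G) = lambda_max S" using lam_empty[OF A0 S0] by simp
      have "lambda_max S > 0" using lS e1 assms(2) by simp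
      moreover have "lambda_max S > c * lambda_max S" using lG e2 by simp
      ultimately show ?thesis using assms(1) by (simp add: mult_le_cancel_right1 not_less[symmetric])
    next
      case False
      hence p: "p > 0" by simp
      have Sup: "\<And>x. x \<in> carrier_vec p \<Longrightarrow> x \<bullet> (S *\<^sub>v x) \<le> lambda_max S * (x \<bullet> x)"
        by (rule lambda_max_bound[OF S Ss p])
      have \<sigma>0: "lambda_max S \<ge> 0" by (rule lambda_max_nonneg[OF S Ss p Spsd])
      show ?thesis
      proof (cases "q = 0")
        case True
        have A0: "transpose_mat G * G \<in> carrier_mat 0 0" using A True by simp
        have eqa: "lambda_max (transpose_mat G * G) = lambda_min (transpose_mat G * G)"
          using lam_empty[OF A0 A0] by simp
        have gpos: "lambda_min (transpose_mat G * G) > 0"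
          using lG \<sigma>0 assms(1) by (smt (verit) mult_nonneg_nonneg)
        have PS: "proj_mat G * S \<in> carrier_mat p p" using S G unfolding proj_mat_def by auto
        have r1: "rho1 S G \<ge> 0" unfolding rho1_def by (rule op_norm_nonneg[OF PS p])
        have "?R \<ge> 0" using r1 rho2_nonneg[of G] eqa gpos by simp
        hence RHS: "C * ?R \<ge> 0" using C0 by simp
        have HT: "H_trunc q (D * D) = D * D" unfolding H_trunc_def using True D by (intro eq_matI) auto
        have GG: "G * transpose_mat G = 0\<^sub>m p p" by (rule mult_zero_dim) (use G True in auto)
        have "?E = 0\<^sub>m p p"
        proof -
          have "?E = (S + G * transpose_mat G) - S" unfolding HT dec ..
          also have "\<dots> = 0\<^sub>m p p" unfolding GG using S by (intro eq_matI) auto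
          finally show ?thesis .
        qed
        hence "max_abs ?E \<le> 0" by (intro max_abs_le) auto
        thus ?thesis using RHS by simp
      next
        case False
        hence q: "q > 0" by simp
        have Glow: "\<And>y. y \<in> carrier_vec q \<Longrightarrow> lambda_min (transpose_mat G * G) * (y \<bullet> y) \<le> y \<bullet> ((transpose_mat G * G) *\<^sub>v y)"
          by (rule lambda_min_bound[OF A As q])
        interpret setting p q S G P D "lambda_max S" "lambda_min (transpose_mat G * G)" c
          by (unfold_locales) (use p q S Ss Spsd Sup \<sigma>0 G fcr' Glow assms(1) lG P PtP D Dd Dord Dpos dec in auto)
        have gu: "lambda_max (transpose_mat G * G) \<ge> lambda_min (transpose_mat G * G)"
          by (rule lambda_min_le_max[OF A As q])
        have "max_abs ?E \<le> beta^2 + 3 * kap * (rho2 G + s_b)"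
        proof (rule max_abs_le)
          fix i j assume "i < dim_row ?E" "j < dim_col ?E"
          hence "i < p" "j < p" using P S by auto
          thus "\<bar>?E $$ (i,j)\<bar> \<le> beta^2 + 3 * kap * (rho2 G + s_b)" by (rule entry_bound)
        next
          show "0 \<le> beta^2 + 3 * kap * (rho2 G + s_b)" using kap_nonneg rho2_nonneg[of G] s_nonneg by simp
        qed
        also have "\<dots> \<le> C * ?R" using final_arith[OF gu] unfolding C_def k_def rho_def .
        finally show ?thesis .
      qed
    qed
  qed
qed

end
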